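(* Let $N_1,N_2\ge1$ be dyadic and suppose $u_1,u_2$ are functions on $\mathbb{R}\times\mathbb{T}_\gamma^2$ with $\operatorname{supp}\widetilde{u_1}\subset\mathfrak{P}_{N_1}$ and $\operatorname{supp}\widetilde{u_2}\subset\mathfrak{P}_{N_2}$. Then for any sufficiently small $\epsilon>0$, \[ \|u_1u_2\|_{L^2_{t,x}}\lesssim \max\{N_1,N_2\}^{\epsilon}\Big(\|u_1\|_{X^{0,\frac12-\epsilon,1}_S}\|u_2\|_{X^{4\epsilon,\frac12-\epsilon,1}_S}+\|u_1\|_{X^{0,\frac12-\epsilon,1}_S}\|u_2\|_{X^{\frac12+2\epsilon,\epsilon,1}_S}\Big), \] with implicit constant independent of $N_1,N_2,u_1,u_2$.
   Context: $\mathbb{T}_\gamma^2=\mathbb{R}^2/(2\pi\gamma_1\mathbb{Z}\times2\pi\gamma_2\mathbb{Z})$, frequencies $k\in\gamma_1^{-1}\mathbb{Z}\times\gamma_2^{-1}\mathbb{Z}$; $\widetilde u(\tau,k)$ is the space-time Fourier transform. $\mathfrak{P}_1:=\{(\tau,k):|k|\le2\}$, $\mathfrak{P}_N:=\{(\tau,k):\frac N2\le|k|\le2N\}$ for $N\ge2$. Let $\eta\in C^\infty(\mathbb{R})$ be even, $\eta\equiv1$ on $[-1,1]$, $\operatorname{supp}\eta\subset(-2,2)$, $0\le\eta\le1$; $\eta_1:=\eta$, $\eta_N(r):=\eta(r/N)-\eta(2r/N)$ for dyadic $N\ge2$. $P_N$ is the spatial Fourier multiplier $\eta_N(|k|)$;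 $Q^S_L$ is the space-time Fourier multiplier $\eta_L(\tau+|k|^2)$; $P^S_{N,L}=P_NQ^S_L$. $\|u\|_{X^{s,b,p}_S}:=\big\|\|N^sL^b\|P^S_{N,L}u\|_{L^2_{t,x}}\|_{\ell^p_L}\big\|_{\ell^2_N}$ over dyadic $N,L\ge1$. *)

theory Defs
  imports "HOL-Analysis.Analysis"
begin

text \<open>The torus is T = R^2/(2 pi g1 Z x 2 pi g2 Z) with g1, g2 > 0.
A function u on R x T is represented by its space-time Fourier transform
  Fu tau m = integral over R x T of u(t,x) exp(-i(t tau + k.x)) dx dt,
with frequency k = (m1/g1, m2/g2), m in Z^2.  All norms below are the physical-space
L^2 norms computed through Plancherel; the product u1 u2 is computed through the
convolution theorem.\<close>

type_synonym stfun = "real \<Rightarrow> int \<times> int \<Rightarrow> complex"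

definition smooth_real :: "(real \<Rightarrow> real) \<Rightarrow> bool" where
  "smooth_real f \<longleftrightarrow> (\<forall>n x. ((deriv ^^ n) f) differentiable (at x))"

definition bump :: "(real \<Rightarrow> real) \<Rightarrow> bool" where
  "bump \<eta> \<longleftrightarrow> smooth_real \<eta> \<and> (\<forall>r. \<eta> (- r) = \<eta> r)
     \<and> (\<forall>r. \<bar>r\<bar> \<le> 1 \<longrightarrow> \<eta> r = 1)
     \<and> (\<forall>r. \<eta> r \<noteq> 0 \<longrightarrow> \<bar>r\<bar> < 2)
     \<and> (\<forall>r. 0 \<le> \<eta> r \<and> \<eta> r \<le> 1)"

definition dyadic :: "real \<Rightarrow> bool" where
  "dyadic N \<longleftrightarrow> (\<exists>j::nat. N = 2 ^ j)"

definition eta_dy :: "(real \<Rightarrow> real) \<Rightarrow> real \<Rightarrow> real \<Rightarrow> real" where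
  "eta_dy \<eta> N r = (if N = 1 then \<eta> r else \<eta> (r / N) - \<eta> (2 * r / N))"

definition freq :: "real \<Rightarrow> real \<Rightarrow> int \<times> int \<Rightarrow> real \<times> real" where
  "freq g1 g2 m = (real_of_int (fst m) / g1, real_of_int (snd m) / g2)"

definition knorm :: "real \<Rightarrow> real \<Rightarrow> int \<times> int \<Rightarrow> real" where
  "knorm g1 g2 m = sqrt ((real_of_int (fst m) / g1)^2 + (real_of_int (snd m) / g2)^2)"

definition in_PN :: "real \<Rightarrow> real \<Rightarrow> real \<Rightarrow> int \<times> int \<Rightarrow> bool" where
  "in_PN g1 g2 N m = (if N = 1 then knorm g1 g2 m \<le> 2
                      else N / 2 \<le> knorm g1 g2 m \<and> knorm g1 g2 m \<le> 2 * N)"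

definition supp_in_PN :: "real \<Rightarrow> real \<Rightarrow> real \<Rightarrow> stfun \<Rightarrow> bool" where
  "supp_in_PN g1 g2 N F \<longleftrightarrow> (\<forall>\<tau> m. \<not> in_PN g1 g2 N m \<longrightarrow> F \<tau> m = 0)"

definition enn_sqrt :: "ennreal \<Rightarrow> ennreal" where
  "enn_sqrt x = (if x = top then top else ennreal (sqrt (enn2real x)))"

definition torus_vol :: "real \<Rightarrow> real \<Rightarrow> real" where
  "torus_vol g1 g2 = 4 * pi^2 * g1 * g2"

definition L2norm :: "real \<Rightarrow> real \<Rightarrow> stfun \<Rightarrow> ennreal" where
  "L2norm g1 g2 F = enn_sqrt (ennreal (1 / (2 * pi * torus_vol g1 g2)) *
      (\<integral>\<^sup>+ \<tau>. (\<integral>\<^sup>+ m. ennreal ((cmod (F \<tau> m))^2) \<partial>count_space UNIV) \<partial>lborel))"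

definition prod_ft :: "real \<Rightarrow> real \<Rightarrow> stfun \<Rightarrow> stfun \<Rightarrow> stfun" where
  "prod_ft g1 g2 F G = (\<lambda>\<tau> m. complex_of_real (1 / (2 * pi * torus_vol g1 g2)) *
      (\<Sum>\<^sub>\<infinity> m1. \<integral> \<tau>1. F \<tau>1 m1 * G (\<tau> - \<tau>1) (m - m1) \<partial>lborel))"

definition PS :: "real \<Rightarrow> real \<Rightarrow> (real \<Rightarrow> real) \<Rightarrow> real \<Rightarrow> real \<Rightarrow> stfun \<Rightarrow> stfun" where
  "PS g1 g2 \<eta> N L F = (\<lambda>\<tau> m. complex_of_real
      (eta_dy \<eta> N (knorm g1 g2 m) * eta_dy \<eta> L (\<tau> + (knorm g1 g2 m)^2)) * F \<tau> m)"

definition XS1 :: "real \<Rightarrow> real \<Rightarrow> (real \<Rightarrow> real) \<Rightarrow> real \<Rightarrow> real \<Rightarrow> stfun \<Rightarrow> ennreal" where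
  "XS1 g1 g2 \<eta> s b F = enn_sqrt (\<Sum>j. (\<Sum>l.
      ennreal ((2 ^ j) powr s * (2 ^ l) powr b)
        * L2norm g1 g2 (PS g1 g2 \<eta> (2 ^ j) (2 ^ l) F))\<^sup>2)"

end

theory Submission
  imports Defs
begin

lemma enn_sqrt_sq[simp]: "(enn_sqrt x)^2 = x"
  by (cases x) (auto simp: enn_sqrt_def ennreal_power)

lemma enn_sqrt_of_sq[simp]: "enn_sqrt (y^2) = y"
  by (cases y) (auto simp: enn_sqrt_def ennreal_power)

lemma ennreal_sq_le_iff: "(x::ennreal)^2 \<le> y^2 \<longleftrightarrow> x \<le> y"
proof
  assume a: "x^2 \<le> y^2" show "x \<le> y"
  proof (rule ccontr)
    assume "\<not> x \<le> y" hence "y < x" by simp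
    then obtain r where r: "y = ennreal r" "0 \<le> r" by (cases y) auto
    show False
    proof (cases x)
      case (real s)
      with r \<open>y < x\<close> have "r < s" by (simp add: ennreal_less_iff)
      hence "r^2 < s^2" using r by (intro power_strict_mono) auto
      with a r real \<open>r < s\<close> show False by (simp add: ennreal_power)
    next
      case top with a r show False by (simp add: ennreal_power top_unique)
    qed
  qed
qed (rule power_mono_ennreal)

lemma enn_sqrt_le_iff: "enn_sqrt x \<le> y \<longleftrightarrow> x \<le> y^2"
  by (metis ennreal_sq_le_iff enn_sqrt_sq)

lemma enn_sqrt_mono: "x \<le> y \<Longrightarrow> enn_sqrt x \<le> enn_sqrt y"
  by (simp add: enn_sqrt_le_iff)

lemma enn_sqrt_mult: "enn_sqrt (x * y) = enn_sqrt x * enn_sqrt y"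
  by (metis enn_sqrt_of_sq enn_sqrt_sq power_mult_distrib)

type_synonym efun = "real \<Rightarrow> int \<times> int \<Rightarrow> ennreal"

definition Qn :: "efun \<Rightarrow> ennreal" where
  "Qn h = (\<integral>\<^sup>+ m. (\<integral>\<^sup>+ \<tau>. (h \<tau> m)^2 \<partial>lborel) \<partial>count_space UNIV)"

definition conv :: "efun \<Rightarrow> efun \<Rightarrow> efun" where
  "conv a b \<tau> m = (\<integral>\<^sup>+ m1. (\<integral>\<^sup>+ \<tau>1. a \<tau>1 m1 * b (\<tau> - \<tau>1) (m - m1) \<partial>lborel) \<partial>count_space UNIV)"

lemma CS_le: 
  assumes "f \<in> borel_measurable M" "g \<in> borel_measurable M"
  shows "(\<integral>\<^sup>+x. f x * g x \<partial>M) \<le> enn_sqrt (\<integral>\<^sup>+x. f x ^ 2 \<partial>M) * enn_sqrt (\<integral>\<^sup>+x. g x ^ 2 \<partial>M)"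
proof -
  have "(\<integral>\<^sup>+x. f x * g x \<partial>M) = enn_sqrt ((\<integral>\<^sup>+x. f x * g x \<partial>M)^2)" by simp
  also have "\<dots> \<le> enn_sqrt ((\<integral>\<^sup>+x. f x ^ 2 \<partial>M) * (\<integral>\<^sup>+x. g x ^ 2 \<partial>M))"
    by (rule enn_sqrt_mono) (rule Cauchy_Schwarz_nn_integral[OF assms])
  also have "\<dots> = enn_sqrt (\<integral>\<^sup>+x. f x ^ 2 \<partial>M) * enn_sqrt (\<integral>\<^sup>+x. g x ^ 2 \<partial>M)"
    by (rule enn_sqrt_mult)
  finally show ?thesis .
qed

lemma CS2:
  fixes f g :: "'a \<Rightarrow> 'b \<Rightarrow> ennreal"
  assumes "\<And>m. f m \<in> borel_measurable M" "\<And>m. g m \<in> borel_measurable M"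
  shows "(\<integral>\<^sup>+m. (\<integral>\<^sup>+x. f m x * g m x \<partial>M) \<partial>count_space UNIV)
     \<le> enn_sqrt (\<integral>\<^sup>+m. (\<integral>\<^sup>+x. f m x ^ 2 \<partial>M) \<partial>count_space UNIV)
       * enn_sqrt (\<integral>\<^sup>+m. (\<integral>\<^sup>+x. g m x ^ 2 \<partial>M) \<partial>count_space UNIV)"
proof -
  have "(\<integral>\<^sup>+m. (\<integral>\<^sup>+x. f m x * g m x \<partial>M) \<partial>count_space UNIV)
      \<le> (\<integral>\<^sup>+m. enn_sqrt (\<integral>\<^sup>+x. f m x ^ 2 \<partial>M) * enn_sqrt (\<integral>\<^sup>+x. g m x ^ 2 \<partial>M) \<partial>count_space UNIV)"
    by (intro nn_integral_mono CS_le assms)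
  also have "\<dots> \<le> enn_sqrt (\<integral>\<^sup>+m. (enn_sqrt (\<integral>\<^sup>+x. f m x ^ 2 \<partial>M))^2 \<partial>count_space UNIV)
       * enn_sqrt (\<integral>\<^sup>+m. (enn_sqrt (\<integral>\<^sup>+x. g m x ^ 2 \<partial>M))^2 \<partial>count_space UNIV)"
    by (rule CS_le) auto
  finally show ?thesis by simp
qed

lemma sq_suminf: "(\<Sum>i. x i :: ennreal)^2 = (\<Sum>i. \<Sum>j. x i * x j)"
proof -
  have "(\<Sum>i. x i)^2 = (\<Sum>i. x i * (\<Sum>j. x j))"
    unfolding power2_eq_square by (rule ennreal_suminf_multc[symmetric])
  also have "\<dots> = (\<Sum>i. \<Sum>j. x i * x j)"
    by (rule suminf_cong) (rule ennreal_suminf_cmult[symmetric])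
  finally show ?thesis .
qed

lemma Qn_suminf:
  assumes meas[measurable]: "\<And>i m. (\<lambda>\<tau>. h i \<tau> m) \<in> borel_measurable lborel"
  shows "Qn (\<lambda>\<tau> m. \<Sum>i. h i \<tau> m) \<le> (\<Sum>i. enn_sqrt (Qn (h i)))^2"
proof -
  have inner: "(\<integral>\<^sup>+ \<tau>. (\<Sum>i. \<Sum>j. h i \<tau> m * h j \<tau> m) \<partial>lborel)
      = (\<Sum>i. \<Sum>j. (\<integral>\<^sup>+ \<tau>. h i \<tau> m * h j \<tau> m \<partial>lborel))" for m
  proof -
    have "(\<integral>\<^sup>+ \<tau>. (\<Sum>i. \<Sum>j. h i \<tau> m * h j \<tau> m) \<partial>lborel)
       = (\<Sum>i. (\<integral>\<^sup>+ \<tau>. (\<Sum>j. h i \<tau> m * h j \<tau> m) \<partial>lborel))"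
      by (rule nn_integral_suminf) measurable
    also have "\<dots> = (\<Sum>i. \<Sum>j. (\<integral>\<^sup>+ \<tau>. h i \<tau> m * h j \<tau> m \<partial>lborel))"
      by (intro suminf_cong nn_integral_suminf) measurable
    finally show ?thesis .
  qed
  have "Qn (\<lambda>\<tau> m. \<Sum>i. h i \<tau> m) = (\<integral>\<^sup>+ m. (\<integral>\<^sup>+ \<tau>. (\<Sum>i. \<Sum>j. h i \<tau> m * h j \<tau> m) \<partial>lborel) \<partial>count_space UNIV)"
    unfolding Qn_def sq_suminf ..
  also have "\<dots> = (\<integral>\<^sup>+ m. (\<Sum>i. \<Sum>j. (\<integral>\<^sup>+ \<tau>. h i \<tau> m * h j \<tau> m \<partial>lborel)) \<partial>count_space UNIV)"
    unfolding inner ..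
  also have "\<dots> = (\<Sum>i. (\<integral>\<^sup>+ m. (\<Sum>j. (\<integral>\<^sup>+ \<tau>. h i \<tau> m * h j \<tau> m \<partial>lborel)) \<partial>count_space UNIV))"
    by (rule nn_integral_suminf) simp
  also have "\<dots> = (\<Sum>i. \<Sum>j. (\<integral>\<^sup>+ m. (\<integral>\<^sup>+ \<tau>. h i \<tau> m * h j \<tau> m \<partial>lborel) \<partial>count_space UNIV))"
    by (intro suminf_cong nn_integral_suminf) simp
  also have "\<dots> \<le> (\<Sum>i. \<Sum>j. enn_sqrt (Qn (h i)) * enn_sqrt (Qn (h j)))"
    unfolding Qn_def
    by (intro suminf_le summableI allI CS2 meas)
  also have "\<dots> = (\<Sum>i. enn_sqrt (Qn (h i)))^2" by (rule sq_suminf[symmetric])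
  finally show ?thesis .
qed

lemma conv_mono:
  assumes "\<And>t m. a t m \<le> a' t m" "\<And>t m. b t m \<le> b' t m"
  shows "conv a b \<tau> m \<le> conv a' b' \<tau> m"
  unfolding conv_def by (intro nn_integral_mono mult_mono assms) auto

lemma shift_meas:
  assumes "(\<lambda>\<tau>. b \<tau>) \<in> borel_measurable lborel"
  shows "(\<lambda>\<tau>1. b (\<tau> - \<tau>1)) \<in> borel_measurable lborel"
  by (rule measurable_compose[OF _ assms]) simp

lemma conv_suminf1:
  assumes m1[measurable]: "\<And>i m. (\<lambda>\<tau>. a i \<tau> m) \<in> borel_measurable lborel"
    and m2: "\<And>m. (\<lambda>\<tau>. b \<tau> m) \<in> borel_measurable lborel"
  shows "conv (\<lambda>t m. \<Sum>i. a i t m) b \<tau> m = (\<Sum>i. conv (a i) b \<tau> m)"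
proof -
  have mb[measurable]: "(\<lambda>\<tau>1. b (\<tau> - \<tau>1) m') \<in> borel_measurable lborel" for m'
    using shift_meas[OF m2] .
  have "(\<integral>\<^sup>+ \<tau>1. (\<Sum>i. a i \<tau>1 m1) * b (\<tau> - \<tau>1) (m - m1) \<partial>lborel)
     = (\<Sum>i. \<integral>\<^sup>+ \<tau>1. a i \<tau>1 m1 * b (\<tau> - \<tau>1) (m - m1) \<partial>lborel)" for m1
    unfolding ennreal_suminf_multc[symmetric] by (rule nn_integral_suminf) measurable
  then show ?thesis unfolding conv_def
    by (simp add: nn_integral_suminf)
qed

lemma conv_suminf2:
  assumes m1[measurable]: "\<And>m. (\<lambda>\<tau>. a \<tau> m) \<in> borel_measurable lborel"
    and m2: "\<And>i m. (\<lambda>\<tau>. b i \<tau> m) \<in> borel_measurable lborel"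
  shows "conv a (\<lambda>t m. \<Sum>i. b i t m) \<tau> m = (\<Sum>i. conv a (b i) \<tau> m)"
proof -
  have mb[measurable]: "(\<lambda>\<tau>1. b i (\<tau> - \<tau>1) m') \<in> borel_measurable lborel" for i m'
    using shift_meas[OF m2] .
  have "(\<integral>\<^sup>+ \<tau>1. a \<tau>1 m1 * (\<Sum>i. b i (\<tau> - \<tau>1) (m - m1)) \<partial>lborel)
     = (\<Sum>i. \<integral>\<^sup>+ \<tau>1. a \<tau>1 m1 * b i (\<tau> - \<tau>1) (m - m1) \<partial>lborel)" for m1
    unfolding ennreal_suminf_cmult[symmetric] by (rule nn_integral_suminf) measurable
  then show ?thesis unfolding conv_def
    by (simp add: nn_integral_suminf)
qed

lemma shift_int:
  fixes f :: "real \<Rightarrow> ennreal" and t :: real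
  assumes "f \<in> borel_measurable borel"
  shows "(\<integral>\<^sup>+ x. f (x - t) \<partial>lborel) = (\<integral>\<^sup>+ x. f x \<partial>lborel)"
  using nn_integral_real_affine[OF assms, where c=1 and t="-t"] by simp

lemma bij_minus_right: "bij_betw (\<lambda>m::int\<times>int. m - m1) UNIV UNIV"
  by (rule bij_betwI[where g="\<lambda>m. m + m1"]) auto

lemma pair_meas:
  fixes A B :: "real \<Rightarrow> ennreal"
  assumes [measurable]: "A \<in> borel_measurable lborel" "B \<in> borel_measurable lborel"
  shows "(\<lambda>(t, t1). A t1 * B (t - t1)) \<in> borel_measurable (lborel \<Otimes>\<^sub>M lborel)"
proof -
  have [measurable]: "(\<lambda>p::real\<times>real. fst p - snd p) \<in> lborel \<Otimes>\<^sub>M lborel \<rightarrow>\<^sub>M lborel"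
    by simp
  show ?thesis by measurable
qed

lemma pair_meas2:
  fixes A B :: "real \<Rightarrow> ennreal"
  assumes [measurable]: "A \<in> borel_measurable lborel" "B \<in> borel_measurable lborel"
  shows "(\<lambda>(t1, t). A t1 * B (t - t1)) \<in> borel_measurable (lborel \<Otimes>\<^sub>M lborel)"
proof -
  have [measurable]: "(\<lambda>p::real\<times>real. snd p - fst p) \<in> lborel \<Otimes>\<^sub>M lborel \<rightarrow>\<^sub>M lborel"
    by simp
  show ?thesis by measurable
qed

lemma inner_meas:
  fixes A B :: "real \<Rightarrow> ennreal"
  assumes "A \<in> borel_measurable lborel" "B \<in> borel_measurable lborel"
  shows "(\<lambda>t. \<integral>\<^sup>+ t1. A t1 * B (t - t1) \<partial>lborel) \<in> borel_measurable lborel"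
  using lborel.borel_measurable_nn_integral[OF pair_meas[OF assms]] by simp

lemma inner_swap:
  fixes A B :: "real \<Rightarrow> ennreal"
  assumes [measurable]: "A \<in> borel_measurable lborel" "B \<in> borel_measurable lborel"
  shows "(\<integral>\<^sup>+ t. (\<integral>\<^sup>+ t1. A t1 * B (t - t1) \<partial>lborel) \<partial>lborel)
       = (\<integral>\<^sup>+ t1. A t1 \<partial>lborel) * (\<integral>\<^sup>+ t. B t \<partial>lborel)"
proof -
  have "(\<integral>\<^sup>+ t. (\<integral>\<^sup>+ t1. A t1 * B (t - t1) \<partial>lborel) \<partial>lborel)
       = (\<integral>\<^sup>+ t1. (\<integral>\<^sup>+ t. A t1 * B (t - t1) \<partial>lborel) \<partial>lborel)"
    using lborel_pair.Fubini'[of "\<lambda>t1 t. A t1 * B (t - t1)", OF pair_meas2[OF assms]] by simp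
  also have "\<dots> = (\<integral>\<^sup>+ t1. A t1 * (\<integral>\<^sup>+ t. B t \<partial>lborel) \<partial>lborel)"
  proof (rule nn_integral_cong)
    fix t1
    have mB: "(\<lambda>t. B (t - t1)) \<in> borel_measurable lborel" by measurable
    have "(\<integral>\<^sup>+ t. A t1 * B (t - t1) \<partial>lborel) = A t1 * (\<integral>\<^sup>+ t. B (t - t1) \<partial>lborel)"
      by (rule nn_integral_cmult[OF mB])
    also have "(\<integral>\<^sup>+ t. B (t - t1) \<partial>lborel) = (\<integral>\<^sup>+ t. B t \<partial>lborel)"
      by (rule shift_int) (use assms in simp)
    finally show "(\<integral>\<^sup>+ t. A t1 * B (t - t1) \<partial>lborel) = A t1 * (\<integral>\<^sup>+ t. B t \<partial>lborel)" .
  qed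
  also have "\<dots> = (\<integral>\<^sup>+ t1. A t1 \<partial>lborel) * (\<integral>\<^sup>+ t. B t \<partial>lborel)"
    by (rule nn_integral_multc) simp
  finally show ?thesis .
qed

lemma conv_pt:
  fixes a b :: efun and sa sb :: "real \<Rightarrow> int \<times> int \<Rightarrow> bool" and M :: ennreal
  assumes ma[measurable]: "\<And>m. (\<lambda>\<tau>. a \<tau> m) \<in> borel_measurable lborel"
    and mb[measurable]: "\<And>m. (\<lambda>\<tau>. b \<tau> m) \<in> borel_measurable lborel"
    and sa[measurable]: "\<And>m. {\<tau>. sa \<tau> m} \<in> sets lborel"
    and sb[measurable]: "\<And>m. {\<tau>. sb \<tau> m} \<in> sets lborel"
    and za: "\<And>\<tau> m. \<not> sa \<tau> m \<Longrightarrow> a \<tau> m = 0" and zb: "\<And>\<tau> m. \<not> sb \<tau> m \<Longrightarrow> b \<tau> m = 0"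
    and bound: "(\<integral>\<^sup>+ m1. (\<integral>\<^sup>+ \<tau>1. indicator {t. sa t m1} \<tau>1 * indicator {t. sb t (m - m1)} (\<tau> - \<tau>1)
                 \<partial>lborel) \<partial>count_space UNIV) \<le> M"
  shows "(conv a b \<tau> m)^2 \<le> M * (\<integral>\<^sup>+ m1. (\<integral>\<^sup>+ \<tau>1. (a \<tau>1 m1)^2 * (b (\<tau> - \<tau>1) (m - m1))^2 \<partial>lborel) \<partial>count_space UNIV)"
proof -
  define I :: "int \<times> int \<Rightarrow> real \<Rightarrow> ennreal" where
    "I m1 \<tau>1 = indicator {t. sa t m1} \<tau>1 * indicator {t. sb t (m - m1)} (\<tau> - \<tau>1)" for m1 \<tau>1
  define X where "X = (\<integral>\<^sup>+ m1. (\<integral>\<^sup>+ \<tau>1. I m1 \<tau>1 \<partial>lborel) \<partial>count_space UNIV)"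
  define P where "P = (\<integral>\<^sup>+ m1. (\<integral>\<^sup>+ \<tau>1. (a \<tau>1 m1)^2 * (b (\<tau> - \<tau>1) (m - m1))^2 \<partial>lborel) \<partial>count_space UNIV)"
  have eq: "a \<tau>1 m1 * b (\<tau> - \<tau>1) (m - m1) = I m1 \<tau>1 * (a \<tau>1 m1 * b (\<tau> - \<tau>1) (m - m1))" for \<tau>1 m1
    using za[of \<tau>1 m1] zb[of "\<tau> - \<tau>1" "m - m1"] by (auto simp: indicator_def I_def)
  have I2: "(I m1 \<tau>1)^2 = I m1 \<tau>1" for m1 \<tau>1 by (auto simp: indicator_def I_def)
  have mI: "(\<lambda>\<tau>1. I m1 \<tau>1) \<in> borel_measurable lborel" for m1
  proof -
    have "(\<lambda>t. indicator {t. sb t (m - m1)} t :: ennreal) \<in> borel_measurable lborel" by measurable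
    from shift_meas[OF this, of \<tau>] show ?thesis unfolding I_def by measurable
  qed
  have mab: "(\<lambda>\<tau>1. a \<tau>1 m1 * b (\<tau> - \<tau>1) (m - m1)) \<in> borel_measurable lborel" for m1
    using shift_meas[OF mb[of "m - m1"], of \<tau>] by measurable
  have "conv a b \<tau> m = (\<integral>\<^sup>+ m1. (\<integral>\<^sup>+ \<tau>1. I m1 \<tau>1 * (a \<tau>1 m1 * b (\<tau> - \<tau>1) (m - m1)) \<partial>lborel) \<partial>count_space UNIV)"
    unfolding conv_def by (intro nn_integral_cong) (rule eq)
  also have "\<dots> \<le> enn_sqrt (\<integral>\<^sup>+ m1. (\<integral>\<^sup>+ \<tau>1. (I m1 \<tau>1)^2 \<partial>lborel) \<partial>count_space UNIV)
     * enn_sqrt (\<integral>\<^sup>+ m1. (\<integral>\<^sup>+ \<tau>1. (a \<tau>1 m1 * b (\<tau> - \<tau>1) (m - m1))^2 \<partial>lborel) \<partial>count_space UNIV)"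
    by (rule CS2) (rule mI, rule mab)
  also have "\<dots> = enn_sqrt X * enn_sqrt P"
    unfolding X_def P_def I2 power_mult_distrib ..
  also have "\<dots> = enn_sqrt (X * P)" by (rule enn_sqrt_mult[symmetric])
  finally have "(conv a b \<tau> m)^2 \<le> (enn_sqrt (X * P))^2" by (rule power_mono_ennreal)
  also have "\<dots> = X * P" by simp
  also have "\<dots> \<le> M * P" using bound unfolding X_def I_def by (rule mult_right_mono) simp
  finally show ?thesis unfolding P_def .
qed

lemma conv_bilinear:
  fixes a b :: efun and sa sb :: "real \<Rightarrow> int \<times> int \<Rightarrow> bool" and M :: ennreal
  assumes ma[measurable]: "\<And>m. (\<lambda>\<tau>. a \<tau> m) \<in> borel_measurable lborel"
    and mb[measurable]: "\<And>m. (\<lambda>\<tau>. b \<tau> m) \<in> borel_measurable lborel"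
    and sa[measurable]: "\<And>m. {\<tau>. sa \<tau> m} \<in> sets lborel"
    and sb[measurable]: "\<And>m. {\<tau>. sb \<tau> m} \<in> sets lborel"
    and za: "\<And>\<tau> m. \<not> sa \<tau> m \<Longrightarrow> a \<tau> m = 0" and zb: "\<And>\<tau> m. \<not> sb \<tau> m \<Longrightarrow> b \<tau> m = 0"
    and bound: "\<And>\<tau> m. (\<integral>\<^sup>+ m1. (\<integral>\<^sup>+ \<tau>1. indicator {t. sa t m1} \<tau>1 * indicator {t. sb t (m - m1)} (\<tau> - \<tau>1)
                 \<partial>lborel) \<partial>count_space UNIV) \<le> M"
  shows "Qn (conv a b) \<le> M * (Qn a * Qn b)"
proof -
  define A where "A m1 t = (a t m1)^2" for m1 t
  define B where "B m1 t = (b t m1)^2" for m1 t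
  have mA[measurable]: "A m1 \<in> borel_measurable lborel" for m1 unfolding A_def by measurable
  have mB[measurable]: "B m1 \<in> borel_measurable lborel" for m1 unfolding B_def by measurable
  define Ai where "Ai m1 = (\<integral>\<^sup>+ t. A m1 t \<partial>lborel)" for m1
  define Bi where "Bi m1 = (\<integral>\<^sup>+ t. B m1 t \<partial>lborel)" for m1
  have step: "(\<integral>\<^sup>+ \<tau>. M * (\<integral>\<^sup>+ m1. (\<integral>\<^sup>+ \<tau>1. A m1 \<tau>1 * B (m - m1) (\<tau> - \<tau>1) \<partial>lborel) \<partial>count_space UNIV) \<partial>lborel)
     = (\<integral>\<^sup>+ m1. M * (Ai m1 * Bi (m - m1)) \<partial>count_space UNIV)" for m
  proof -
    have "(\<integral>\<^sup>+ \<tau>. M * (\<integral>\<^sup>+ m1. (\<integral>\<^sup>+ \<tau>1. A m1 \<tau>1 * B (m - m1) (\<tau> - \<tau>1) \<partial>lborel) \<partial>count_space UNIV) \<partial>lborel)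
      = (\<integral>\<^sup>+ \<tau>. (\<integral>\<^sup>+ m1. M * (\<integral>\<^sup>+ \<tau>1. A m1 \<tau>1 * B (m - m1) (\<tau> - \<tau>1) \<partial>lborel) \<partial>count_space UNIV) \<partial>lborel)"
      by (intro nn_integral_cong nn_integral_cmult[symmetric]) simp
    also have "\<dots> = (\<integral>\<^sup>+ m1. (\<integral>\<^sup>+ \<tau>. M * (\<integral>\<^sup>+ \<tau>1. A m1 \<tau>1 * B (m - m1) (\<tau> - \<tau>1) \<partial>lborel) \<partial>lborel) \<partial>count_space UNIV)"
      by (rule nn_integral_count_space_nn_integral) (auto intro!: borel_measurable_times_ennreal inner_meas)
    also have "\<dots> = (\<integral>\<^sup>+ m1. M * (Ai m1 * Bi (m - m1)) \<partial>count_space UNIV)"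
    proof (rule nn_integral_cong)
      fix m1
      show "(\<integral>\<^sup>+ \<tau>. M * (\<integral>\<^sup>+ \<tau>1. A m1 \<tau>1 * B (m - m1) (\<tau> - \<tau>1) \<partial>lborel) \<partial>lborel) = M * (Ai m1 * Bi (m - m1))"
        by (subst nn_integral_cmult) (auto intro: inner_meas simp: inner_swap Ai_def Bi_def)
    qed
    finally show ?thesis .
  qed
  have "Qn (conv a b) \<le> (\<integral>\<^sup>+ m. (\<integral>\<^sup>+ \<tau>. M * (\<integral>\<^sup>+ m1. (\<integral>\<^sup>+ \<tau>1. A m1 \<tau>1 * B (m - m1) (\<tau> - \<tau>1) \<partial>lborel) \<partial>count_space UNIV) \<partial>lborel) \<partial>count_space UNIV)"
    unfolding Qn_def A_def B_def
    by (intro nn_integral_mono conv_pt[OF ma mb sa sb za zb bound])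
  also have "\<dots> = (\<integral>\<^sup>+ m. (\<integral>\<^sup>+ m1. M * (Ai m1 * Bi (m - m1)) \<partial>count_space UNIV) \<partial>count_space UNIV)"
    unfolding step ..
  also have "\<dots> = (\<integral>\<^sup>+ m1. (\<integral>\<^sup>+ m. M * (Ai m1 * Bi (m - m1)) \<partial>count_space UNIV) \<partial>count_space UNIV)"
    by (rule nn_integral_count_space_nn_integral) auto
  also have "\<dots> = (\<integral>\<^sup>+ m1. M * Ai m1 * (\<integral>\<^sup>+ m. Bi m \<partial>count_space UNIV) \<partial>count_space UNIV)"
  proof (rule nn_integral_cong)
    fix m1
    have "(\<integral>\<^sup>+ m. M * (Ai m1 * Bi (m - m1)) \<partial>count_space UNIV) = M * Ai m1 * (\<integral>\<^sup>+ m. Bi (m - m1) \<partial>count_space UNIV)"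
      by (subst nn_integral_cmult[symmetric]) (auto simp: mult.assoc)
    also have "(\<integral>\<^sup>+ m. Bi (m - m1) \<partial>count_space UNIV) = (\<integral>\<^sup>+ m. Bi m \<partial>count_space UNIV)"
      by (rule nn_integral_bij_count_space[OF bij_minus_right])
    finally show "(\<integral>\<^sup>+ m. M * (Ai m1 * Bi (m - m1)) \<partial>count_space UNIV) = M * Ai m1 * (\<integral>\<^sup>+ m. Bi m \<partial>count_space UNIV)" .
  qed
  also have "\<dots> = M * (\<integral>\<^sup>+ m1. Ai m1 \<partial>count_space UNIV) * (\<integral>\<^sup>+ m. Bi m \<partial>count_space UNIV)"
    by (simp add: nn_integral_cmult nn_integral_multc mult.assoc)
  also have "\<dots> = M * (Qn a * Qn b)"
    unfolding Qn_def Ai_def Bi_def A_def B_def by (simp add: mult.assoc)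
  finally show ?thesis .
qed

definition nnf :: "stfun \<Rightarrow> efun" where
  "nnf F \<tau> m = ennreal (cmod (F \<tau> m))"

lemma infsum_norm_le:
  fixes f :: "'a \<Rightarrow> complex"
  shows "ennreal (norm (infsum f A)) \<le> (\<integral>\<^sup>+ x. ennreal (norm (f x)) \<partial>count_space A)"
proof (cases "f summable_on A")
  case False then show ?thesis by (simp add: infsum_not_exists)
next
  case True
  then have "(\<lambda>x. norm (f x)) summable_on A" using summable_on_iff_abs_summable_on_complex by blast
  then have as: "Infinite_Set_Sum.abs_summable_on f A" using abs_summable_equivalent by blast
  have "norm (infsum f A) = norm (infsetsum f A)" using infsetsum_infsum[OF as] by simp
  also have "\<dots> \<le> infsetsum (\<lambda>x. norm (f x)) A" by (rule norm_infsetsum_bound)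
  finally have "ennreal (norm (infsum f A)) \<le> ennreal (infsetsum (\<lambda>x. norm (f x)) A)" by (rule ennreal_leI)
  also have "\<dots> = (\<integral>\<^sup>+ x. ennreal (norm (f x)) \<partial>count_space A)"
    by (rule nn_integral_conv_infsetsum[symmetric]) (use as in auto)
  finally show ?thesis .
qed

lemma integral_norm_le:
  fixes h :: "real \<Rightarrow> complex"
  shows "ennreal (norm (integral\<^sup>L lborel h)) \<le> (\<integral>\<^sup>+ x. ennreal (norm (h x)) \<partial>lborel)"
proof (cases "integrable lborel h")
  case True then show ?thesis by (rule integral_norm_bound_ennreal)
next
  case False then show ?thesis by (simp add: not_integrable_integral_eq)
qed

definition cst :: "real \<Rightarrow> real \<Rightarrow> real" where
  "cst g1 g2 = 1 / (2 * pi * torus_vol g1 g2)"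

lemma cst_pos: "g1 > 0 \<Longrightarrow> g2 > 0 \<Longrightarrow> cst g1 g2 > 0"
  by (simp add: cst_def torus_vol_def)

lemma prod_bound:
  assumes "g1 > 0" "g2 > 0"
  shows "nnf (prod_ft g1 g2 F1 F2) \<tau> m \<le> ennreal (cst g1 g2) * conv (nnf F1) (nnf F2) \<tau> m"
proof -
  have c: "cst g1 g2 > 0" using cst_pos assms .
  have "nnf (prod_ft g1 g2 F1 F2) \<tau> m = ennreal (cst g1 g2) *
     ennreal (norm (\<Sum>\<^sub>\<infinity> m1. \<integral> \<tau>1. F1 \<tau>1 m1 * F2 (\<tau> - \<tau>1) (m - m1) \<partial>lborel))"
    using c unfolding nnf_def prod_ft_def cst_def[symmetric]
    by (simp add: norm_mult ennreal_mult)
  also have "\<dots> \<le> ennreal (cst g1 g2) * (\<integral>\<^sup>+ m1. ennreal (norm (\<integral> \<tau>1. F1 \<tau>1 m1 * F2 (\<tau> - \<tau>1) (m - m1) \<partial>lborel)) \<partial>count_space UNIV)"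
    by (intro mult_left_mono infsum_norm_le) simp
  also have "\<dots> \<le> ennreal (cst g1 g2) * conv (nnf F1) (nnf F2) \<tau> m"
    unfolding conv_def nnf_def
    by (intro mult_left_mono nn_integral_mono order_trans[OF integral_norm_le])
       (auto simp: norm_mult ennreal_mult)
  finally show ?thesis .
qed

lemma bump_cont: "bump \<eta> \<Longrightarrow> continuous_on UNIV \<eta>"
proof -
  assume "bump \<eta>"
  then have "\<And>x. \<eta> differentiable (at x)"
    unfolding bump_def smooth_real_def by (metis funpow_0)
  then show ?thesis
    by (simp add: continuous_at_imp_continuous_on differentiable_imp_continuous_within)
qed

lemma bump_meas: "bump \<eta> \<Longrightarrow> \<eta> \<in> borel_measurable borel"
  by (rule borel_measurable_continuous_onI, erule bump_cont)

lemma eta_dy_meas: "bump \<eta> \<Longrightarrow> eta_dy \<eta> N \<in> borel_measurable borel"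
proof -
  assume b: "bump \<eta>"
  note [measurable] = bump_meas[OF b]
  show ?thesis
  proof (cases "N = 1")
    case True then show ?thesis unfolding eta_dy_def[abs_def] by simp
  next
    case False then show ?thesis unfolding eta_dy_def[abs_def] by simp
  qed
qed

lemma eta_dy_supp:
  assumes "bump \<eta>" "N \<ge> 1" "eta_dy \<eta> N r \<noteq> 0"
  shows "\<bar>r\<bar> < 2 * N"
proof (cases "N = 1")
  case True
  then have "\<eta> r \<noteq> 0" using assms by (simp add: eta_dy_def)
  then show ?thesis using assms(1) True unfolding bump_def by auto
next
  case False
  then have "\<eta> (r / N) \<noteq> 0 \<or> \<eta> (2 * r / N) \<noteq> 0" using assms by (auto simp: eta_dy_def)
  then have "\<bar>r / N\<bar> < 2 \<or> \<bar>2 * r / N\<bar> < 2" using assms(1) unfolding bump_def by blast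
  then show ?thesis using assms(2) by (auto simp: abs_divide field_simps)
qed

lemma eta_dy_supp_low:
  assumes "bump \<eta>" "N \<noteq> 1" "N > 0" "eta_dy \<eta> N r \<noteq> 0"
  shows "\<bar>r\<bar> > N / 2"
proof (rule ccontr)
  assume "\<not> \<bar>r\<bar> > N / 2"
  then have "\<bar>r / N\<bar> \<le> 1" "\<bar>2 * r / N\<bar> \<le> 1" using assms(3) by (auto simp: abs_divide field_simps)
  then have "\<eta> (r / N) = 1" "\<eta> (2 * r / N) = 1" using assms(1) unfolding bump_def by blast+
  then show False using assms by (simp add: eta_dy_def)
qed

lemma eta_tele: "(\<Sum>j<Suc J. eta_dy \<eta> (2^j) r) = \<eta> (r / 2^J)"
proof (induction J)
  case 0 then show ?case by (simp add: eta_dy_def)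
next
  case (Suc J)
  have "(2::real) * 2^J \<noteq> 1" using one_le_power[of "2::real" J] by linarith
  then show ?case using Suc by (simp add: eta_dy_def field_simps)
qed

lemma eta_sum_one:
  assumes "bump \<eta>" "\<bar>r\<bar> \<le> 2^J"
  shows "(\<Sum>j<Suc J. eta_dy \<eta> (2^j) r) = 1"
proof -
  have "\<bar>r / 2^J\<bar> \<le> 1" using assms(2) by (simp add: abs_divide field_simps)
  then show ?thesis using assms(1) unfolding eta_tele bump_def by blast
qed

lemma PS_meas:
  assumes b: "bump \<eta>" and mF: "\<And>m. (\<lambda>\<tau>. F \<tau> m) \<in> borel_measurable lborel"
  shows "(\<lambda>\<tau>. nnf (PS g1 g2 \<eta> N L F) \<tau> m) \<in> borel_measurable lborel"
proof -
  note [measurable] = eta_dy_meas[OF b]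
  have [measurable]: "(\<lambda>\<tau>. F \<tau> m) \<in> borel_measurable borel" using mF[of m] by simp
  show ?thesis unfolding nnf_def PS_def by simp
qed

lemma decomp:
  assumes b: "bump \<eta>"
  shows "nnf F \<tau> m \<le> (\<Sum>j. \<Sum>l. nnf (PS g1 g2 \<eta> (2^j) (2^l) F) \<tau> m)"
proof -
  define k where "k = knorm g1 g2 m"
  define s where "s = \<tau> + k^2"
  obtain J where J: "\<bar>k\<bar> < 2^J" using real_arch_pow[of 2 "\<bar>k\<bar>"] by auto
  obtain L where L: "\<bar>s\<bar> < 2^L" using real_arch_pow[of 2 "\<bar>s\<bar>"] by auto
  define e where "e j = eta_dy \<eta> (2^j) k" for j :: nat
  define d where "d l = eta_dy \<eta> (2^l) s" for l :: nat
  have se: "(\<Sum>j<Suc J. e j) = 1" unfolding e_def using eta_sum_one[OF b, of k J] J by simp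
  have sd: "(\<Sum>l<Suc L. d l) = 1" unfolding d_def using eta_sum_one[OF b, of s L] L by simp
  have PSe: "PS g1 g2 \<eta> (2^j) (2^l) F \<tau> m = complex_of_real (e j * d l) * F \<tau> m" for j l
    unfolding PS_def e_def d_def k_def s_def by simp
  have "F \<tau> m = complex_of_real ((\<Sum>j<Suc J. e j) * (\<Sum>l<Suc L. d l)) * F \<tau> m"
    using se sd by simp
  also have "\<dots> = (\<Sum>j<Suc J. \<Sum>l<Suc L. PS g1 g2 \<eta> (2^j) (2^l) F \<tau> m)"
  proof -
    have "complex_of_real ((\<Sum>j<Suc J. e j) * (\<Sum>l<Suc L. d l)) * F \<tau> m
        = (\<Sum>j<Suc J. complex_of_real (e j) * ((\<Sum>l<Suc L. complex_of_real (d l)) * F \<tau> m))"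
      unfolding of_real_mult of_real_sum mult.assoc by (rule sum_distrib_right)
    also have "\<dots> = (\<Sum>j<Suc J. \<Sum>l<Suc L. complex_of_real (e j) * (complex_of_real (d l) * F \<tau> m))"
      unfolding sum_distrib_right sum_distrib_left ..
    finally show ?thesis unfolding PSe of_real_mult mult.assoc .
  qed
  finally have Feq: "F \<tau> m = (\<Sum>j<Suc J. \<Sum>l<Suc L. PS g1 g2 \<eta> (2^j) (2^l) F \<tau> m)" .
  have "norm (F \<tau> m) \<le> (\<Sum>j<Suc J. \<Sum>l<Suc L. norm (PS g1 g2 \<eta> (2^j) (2^l) F \<tau> m))"
  proof -
    have "norm (\<Sum>j<Suc J. \<Sum>l<Suc L. PS g1 g2 \<eta> (2^j) (2^l) F \<tau> m)
       \<le> (\<Sum>j<Suc J. norm (\<Sum>l<Suc L. PS g1 g2 \<eta> (2^j) (2^l) F \<tau> m))" by (rule norm_sum)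
    also have "\<dots> \<le> (\<Sum>j<Suc J. \<Sum>l<Suc L. norm (PS g1 g2 \<eta> (2^j) (2^l) F \<tau> m))"
      by (intro sum_mono norm_sum)
    finally show ?thesis using Feq by simp
  qed
  then have "nnf F \<tau> m \<le> ennreal (\<Sum>j<Suc J. \<Sum>l<Suc L. norm (PS g1 g2 \<eta> (2^j) (2^l) F \<tau> m))"
    unfolding nnf_def by (rule ennreal_leI)
  also have "\<dots> = (\<Sum>j<Suc J. \<Sum>l<Suc L. nnf (PS g1 g2 \<eta> (2^j) (2^l) F) \<tau> m)"
    unfolding nnf_def by (subst sum_ennreal, simp add: sum_nonneg)+ (rule refl)
  also have "\<dots> \<le> (\<Sum>j<Suc J. \<Sum>l. nnf (PS g1 g2 \<eta> (2^j) (2^l) F) \<tau> m)"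
    by (intro sum_mono sum_le_suminf) auto
  also have "\<dots> \<le> (\<Sum>j. \<Sum>l. nnf (PS g1 g2 \<eta> (2^j) (2^l) F) \<tau> m)"
    by (intro sum_le_suminf) auto
  finally show ?thesis .
qed

lemma int_count:
  fixes g x y :: real
  assumes g: "g > 0"
  shows "real (card {b::int. x \<le> b / g \<and> b / g \<le> y}) \<le> g * max 0 (y - x) + 1"
proof -
  have sub: "{b::int. x \<le> b / g \<and> b / g \<le> y} \<subseteq> {\<lceil>g * x\<rceil> .. \<lfloor>g * y\<rfloor>}"
  proof
    fix b :: int assume "b \<in> {b::int. x \<le> b / g \<and> b / g \<le> y}"
    then have "g * x \<le> b" "b \<le> g * y" using g by (auto simp: field_simps)
    then show "b \<in> {\<lceil>g * x\<rceil> .. \<lfloor>g * y\<rfloor>}" by (simp add: ceiling_le_iff le_floor_iff)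
  qed
  have "card {b::int. x \<le> b / g \<and> b / g \<le> y} \<le> card {\<lceil>g * x\<rceil> .. \<lfloor>g * y\<rfloor>}"
    by (rule card_mono[OF _ sub]) simp
  also have "\<dots> = nat (\<lfloor>g * y\<rfloor> - \<lceil>g * x\<rceil> + 1)" by simp
  finally have c: "real (card {b::int. x \<le> b / g \<and> b / g \<le> y}) \<le> real (nat (\<lfloor>g * y\<rfloor> - \<lceil>g * x\<rceil> + 1))"
    by linarith
  show ?thesis
  proof (cases "\<lfloor>g * y\<rfloor> - \<lceil>g * x\<rceil> + 1 \<le> 0")
    case True
    then show ?thesis using c g by (simp add: max_def)
  next
    case False
    then have "real (nat (\<lfloor>g * y\<rfloor> - \<lceil>g * x\<rceil> + 1)) = \<lfloor>g * y\<rfloor> - \<lceil>g * x\<rceil> + 1" by simp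
    also have "\<dots> \<le> g * y - g * x + 1"
      using of_int_floor_le[of "g*y"] le_of_int_ceiling[of "g*x"] by linarith
    also have "\<dots> \<le> g * max 0 (y - x) + 1" using g
      by (simp add: max_def right_diff_distrib mult_le_0_iff)
    finally show ?thesis using c by linarith
  qed
qed

lemma sqrt_diff_anti:
  fixes s \<beta> l :: real
  assumes "0 \<le> \<beta>" "\<beta> \<le> s" "0 \<le> l"
  shows "sqrt (s + l) - sqrt s \<le> sqrt (\<beta> + l) - sqrt \<beta>"
proof -
  have "\<beta> * l \<le> s * l" by (rule mult_right_mono) (use assms in auto)
  then have "(s + l) * \<beta> \<le> (\<beta> + l) * s" by (simp add: algebra_simps)
  then have m: "sqrt (s + l) * sqrt \<beta> \<le> sqrt (\<beta> + l) * sqrt s"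
    by (simp add: real_sqrt_mult[symmetric])
  have "(sqrt (s + l) + sqrt \<beta>)^2 \<le> (sqrt (\<beta> + l) + sqrt s)^2"
    using assms m by (simp add: power2_sum algebra_simps)
  then have "sqrt (s + l) + sqrt \<beta> \<le> sqrt (\<beta> + l) + sqrt s"
    by (rule power2_le_imp_le) (use assms in simp)
  then show ?thesis by simp
qed

lemma Lam_facts:
  fixes \<beta> l :: real
  assumes "0 \<le> \<beta>" "0 \<le> l"
  shows "0 \<le> sqrt (\<beta> + l) - sqrt \<beta>"
    and "(sqrt (\<beta> + l) - sqrt \<beta>) * sqrt (\<beta> + l) \<le> l"
    and "sqrt (\<beta> + l) - sqrt \<beta> \<le> l + 1"
proof -
  show "0 \<le> sqrt (\<beta> + l) - sqrt \<beta>" using assms by simp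
  have "sqrt \<beta> * sqrt \<beta> \<le> sqrt \<beta> * sqrt (\<beta> + l)" using assms by (intro mult_left_mono) auto
  then show "(sqrt (\<beta> + l) - sqrt \<beta>) * sqrt (\<beta> + l) \<le> l" using assms
    by (simp add: algebra_simps)
  have "sqrt (\<beta> + l) \<le> sqrt \<beta> + sqrt l"
  proof (rule power2_le_imp_le)
    show "(sqrt (\<beta> + l))^2 \<le> (sqrt \<beta> + sqrt l)^2" using assms by (simp add: power2_sum)
  qed (use assms in simp)
  moreover have "sqrt l \<le> l + 1"
  proof -
    have "0 \<le> (sqrt l - 1)^2" by simp
    then have "0 \<le> (sqrt l)^2 - 2 * sqrt l + 1" by (simp add: power2_diff)
    then show ?thesis using assms by simp
  qed
  ultimately show "sqrt (\<beta> + l) - sqrt \<beta> \<le> l + 1" by linarith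
qed

lemma int_fin:
  fixes g x y :: real
  assumes g: "g > 0"
  shows "finite {b::int. x \<le> b / g \<and> b / g \<le> y}"
proof (rule finite_subset[of _ "{\<lceil>g * x\<rceil> .. \<lfloor>g * y\<rfloor>}"])
  show "{b::int. x \<le> b / g \<and> b / g \<le> y} \<subseteq> {\<lceil>g * x\<rceil> .. \<lfloor>g * y\<rfloor>}"
  proof
    fix b :: int assume "b \<in> {b::int. x \<le> b / g \<and> b / g \<le> y}"
    then have "g * x \<le> b" "b \<le> g * y" using g by (auto simp: field_simps)
    then show "b \<in> {\<lceil>g * x\<rceil> .. \<lfloor>g * y\<rfloor>}" by (simp add: ceiling_le_iff le_floor_iff)
  qed
qed simp

lemma fiber_count:
  fixes g c \<sigma>0 l \<beta> :: real
  assumes g: "g > 0" and b0: "0 \<le> \<beta>" and l0: "0 \<le> l"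
  shows "real (card {b::int. \<sigma>0 < (b/g - c)^2 \<and> (b/g - c)^2 < \<sigma>0 + l \<and> \<beta> \<le> (b/g - c)^2})
     \<le> 2 * (g * (sqrt (\<beta> + l) - sqrt \<beta>) + 1)"
proof -
  define s where "s = max \<sigma>0 \<beta>"
  define U1 where "U1 = {b::int. c + sqrt s \<le> b/g \<and> b/g \<le> c + sqrt (\<sigma>0 + l)}"
  define U2 where "U2 = {b::int. c - sqrt (\<sigma>0 + l) \<le> b/g \<and> b/g \<le> c - sqrt s}"
  have "\<beta> \<le> s" unfolding s_def by simp
  have lam: "sqrt (\<sigma>0 + l) - sqrt s \<le> sqrt (\<beta> + l) - sqrt \<beta>"
  proof -
    have "sqrt (\<sigma>0 + l) \<le> sqrt (s + l)" unfolding s_def by simp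
    moreover have "sqrt (s + l) - sqrt s \<le> sqrt (\<beta> + l) - sqrt \<beta>"
      by (rule sqrt_diff_anti) (use b0 l0 \<open>\<beta> \<le> s\<close> in auto)
    ultimately show ?thesis by linarith
  qed
  have lam0: "0 \<le> sqrt (\<beta> + l) - sqrt \<beta>" using b0 l0 by simp
  have sub: "{b::int. \<sigma>0 < (b/g - c)^2 \<and> (b/g - c)^2 < \<sigma>0 + l \<and> \<beta> \<le> (b/g - c)^2} \<subseteq> U1 \<union> U2"
  proof
    fix b :: int
    assume "b \<in> {b::int. \<sigma>0 < (b/g - c)^2 \<and> (b/g - c)^2 < \<sigma>0 + l \<and> \<beta> \<le> (b/g - c)^2}"
    then have h: "\<sigma>0 < (b/g - c)^2" "(b/g - c)^2 < \<sigma>0 + l" "\<beta> \<le> (b/g - c)^2" by auto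
    have "s \<le> (b/g - c)^2" using h unfolding s_def by simp
    then have lo: "sqrt s \<le> \<bar>b/g - c\<bar>" by (metis real_sqrt_abs real_sqrt_le_mono)
    have hi: "\<bar>b/g - c\<bar> \<le> sqrt (\<sigma>0 + l)" using h(2) by (metis less_imp_le real_sqrt_abs real_sqrt_le_mono)
    show "b \<in> U1 \<union> U2"
    proof (cases "b/g - c \<ge> 0")
      case True then show ?thesis using lo hi unfolding U1_def by auto
    next
      case False then show ?thesis using lo hi unfolding U2_def by auto
    qed
  qed
  have "card {b::int. \<sigma>0 < (b/g - c)^2 \<and> (b/g - c)^2 < \<sigma>0 + l \<and> \<beta> \<le> (b/g - c)^2} \<le> card (U1 \<union> U2)"
    by (rule card_mono[OF _ sub]) (simp add: U1_def U2_def int_fin[OF g])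
  also have "\<dots> \<le> card U1 + card U2" by (rule card_Un_le)
  finally have "real (card {b::int. \<sigma>0 < (b/g - c)^2 \<and> (b/g - c)^2 < \<sigma>0 + l \<and> \<beta> \<le> (b/g - c)^2})
      \<le> real (card U1) + real (card U2)" by linarith
  also have "real (card U1) \<le> g * (sqrt (\<beta> + l) - sqrt \<beta>) + 1"
  proof -
    have "real (card U1) \<le> g * max 0 (c + sqrt (\<sigma>0 + l) - (c + sqrt s)) + 1" unfolding U1_def by (rule int_count[OF g])
    also have "\<dots> \<le> g * (sqrt (\<beta> + l) - sqrt \<beta>) + 1" using g lam lam0 by (intro add_right_mono mult_left_mono) auto
    finally show ?thesis .
  qed
  also have "real (card U2) \<le> g * (sqrt (\<beta> + l) - sqrt \<beta>) + 1"
  proof -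
    have "real (card U2) \<le> g * max 0 (c - sqrt s - (c - sqrt (\<sigma>0 + l))) + 1" unfolding U2_def by (rule int_count[OF g])
    also have "\<dots> \<le> g * (sqrt (\<beta> + l) - sqrt \<beta>) + 1" using g lam lam0 by (intro add_right_mono mult_left_mono) auto
    finally show ?thesis .
  qed
  finally show ?thesis by simp
qed

lemma fiber_fin:
  fixes g c \<sigma>0 l \<beta> :: real
  assumes g: "g > 0" and l0: "0 \<le> l"
  shows "finite {b::int. \<sigma>0 < (b/g - c)^2 \<and> (b/g - c)^2 < \<sigma>0 + l \<and> \<beta> \<le> (b/g - c)^2}"
proof (rule finite_subset[OF _ int_fin[OF g, of "c - sqrt (\<bar>\<sigma>0\<bar> + l)" "c + sqrt (\<bar>\<sigma>0\<bar> + l)"]])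
  show "{b::int. \<sigma>0 < (b/g - c)^2 \<and> (b/g - c)^2 < \<sigma>0 + l \<and> \<beta> \<le> (b/g - c)^2}
    \<subseteq> {b::int. c - sqrt (\<bar>\<sigma>0\<bar> + l) \<le> b/g \<and> b/g \<le> c + sqrt (\<bar>\<sigma>0\<bar> + l)}"
  proof
    fix b :: int assume "b \<in> {b::int. \<sigma>0 < (b/g - c)^2 \<and> (b/g - c)^2 < \<sigma>0 + l \<and> \<beta> \<le> (b/g - c)^2}"
    then have "(b/g - c)^2 \<le> \<bar>\<sigma>0\<bar> + l" by auto
    then have "\<bar>b/g - c\<bar> \<le> sqrt (\<bar>\<sigma>0\<bar> + l)" by (metis real_sqrt_abs real_sqrt_le_mono)
    then show "b \<in> {b::int. c - sqrt (\<bar>\<sigma>0\<bar> + l) \<le> b/g \<and> b/g \<le> c + sqrt (\<bar>\<sigma>0\<bar> + l)}" by auto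
  qed
qed

lemma half_count:
  fixes g1 g2 c1 c2 d1 r \<alpha> l :: real
  assumes g1: "g1 > 0" and g2: "g2 > 0" and l0: "l \<ge> 0" and r0: "r \<ge> 0"
  shows "finite {(a::int,b::int). \<bar>a/g1 - d1\<bar> < r \<and> \<alpha> < (a/g1-c1)^2 + (b/g2-c2)^2
     \<and> (a/g1-c1)^2 + (b/g2-c2)^2 < \<alpha> + l \<and> (a/g1-c1)^2 \<le> (b/g2-c2)^2}
    \<and> real (card {(a::int,b::int). \<bar>a/g1 - d1\<bar> < r \<and> \<alpha> < (a/g1-c1)^2 + (b/g2-c2)^2
     \<and> (a/g1-c1)^2 + (b/g2-c2)^2 < \<alpha> + l \<and> (a/g1-c1)^2 \<le> (b/g2-c2)^2})
    \<le> 4*g1*g2*l + 2*g2*(l+1) + 4*g1*r + 2"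
proof -
  define \<beta> where "\<beta> = max (\<alpha>/2) 0"
  define \<Lambda> where "\<Lambda> = sqrt (\<beta> + l) - sqrt \<beta>"
  define A where "A = {a::int. \<bar>a/g1 - d1\<bar> < r \<and> (a/g1 - c1)^2 < \<beta> + l}"
  define fib where "fib a = {b::int. \<alpha> - (a/g1-c1)^2 < (b/g2 - c2)^2 \<and> (b/g2 - c2)^2 < (\<alpha> - (a/g1-c1)^2) + l
                   \<and> \<beta> \<le> (b/g2 - c2)^2}" for a :: int
  define T where "T = {(a::int,b::int). \<bar>a/g1 - d1\<bar> < r \<and> \<alpha> < (a/g1-c1)^2 + (b/g2-c2)^2
     \<and> (a/g1-c1)^2 + (b/g2-c2)^2 < \<alpha> + l \<and> (a/g1-c1)^2 \<le> (b/g2-c2)^2}"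
  have b0: "0 \<le> \<beta>" unfolding \<beta>_def by simp
  have L: "0 \<le> \<Lambda>" "\<Lambda> * sqrt (\<beta> + l) \<le> l" "\<Lambda> \<le> l + 1"
    unfolding \<Lambda>_def using Lam_facts[OF b0 l0] by auto
  have sub: "T \<subseteq> Sigma A fib"
  proof
    fix p assume "p \<in> T"
    then obtain a b where p: "p = (a,b)" and h: "\<bar>a/g1 - d1\<bar> < r" "\<alpha> < (a/g1-c1)^2 + (b/g2-c2)^2"
      "(a/g1-c1)^2 + (b/g2-c2)^2 < \<alpha> + l" "(a/g1-c1)^2 \<le> (b/g2-c2)^2" unfolding T_def by auto
    have "(a/g1 - c1)^2 < \<beta> + l" using h l0 unfolding \<beta>_def by (auto simp: max_def)
    then have "a \<in> A" using h unfolding A_def by auto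
    moreover have "\<beta> \<le> (b/g2 - c2)^2" using h unfolding \<beta>_def by (auto simp: max_def)
    then have "b \<in> fib a" using h unfolding fib_def by auto
    ultimately show "p \<in> Sigma A fib" using p by auto
  qed
  have Afin: "finite A"
    by (rule finite_subset[OF _ int_fin[OF g1, of "d1 - r" "d1 + r"]]) (auto simp: A_def)
  have fibfin: "finite (fib a)" for a unfolding fib_def by (rule fiber_fin[OF g2 l0])
  have "card T \<le> card (Sigma A fib)"
    by (rule card_mono[OF _ sub]) (use Afin fibfin in auto)
  also have "\<dots> = (\<Sum>a\<in>A. card (fib a))" by (rule card_SigmaI) (use Afin fibfin in auto)
  finally have "real (card T) \<le> real (\<Sum>a\<in>A. card (fib a))" by (simp only: of_nat_le_iff)
  also have "\<dots> = (\<Sum>a\<in>A. real (card (fib a)))" by (rule of_nat_sum)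
  also have "\<dots> \<le> (\<Sum>a\<in>A. 2 * (g2 * \<Lambda> + 1))"
    by (intro sum_mono) (unfold fib_def \<Lambda>_def, rule fiber_count[OF g2 b0 l0])
  also have "\<dots> = real (card A) * (2 * (g2 * \<Lambda> + 1))" by simp
  finally have cT: "real (card T) \<le> 2 * g2 * \<Lambda> * real (card A) + 2 * real (card A)"
    by (simp add: algebra_simps)
  have cA1: "real (card A) \<le> 2 * g1 * sqrt (\<beta> + l) + 1"
  proof -
    have "A \<subseteq> {a::int. c1 - sqrt (\<beta> + l) \<le> a/g1 \<and> a/g1 \<le> c1 + sqrt (\<beta> + l)}"
    proof
      fix a assume "a \<in> A"
      then have "(a/g1 - c1)^2 \<le> \<beta> + l" unfolding A_def by auto
      then have "\<bar>a/g1 - c1\<bar> \<le> sqrt (\<beta> + l)" by (metis real_sqrt_abs real_sqrt_le_mono)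
      then show "a \<in> {a::int. c1 - sqrt (\<beta> + l) \<le> a/g1 \<and> a/g1 \<le> c1 + sqrt (\<beta> + l)}" by auto
    qed
    then have "card A \<le> card {a::int. c1 - sqrt (\<beta> + l) \<le> a/g1 \<and> a/g1 \<le> c1 + sqrt (\<beta> + l)}"
      by (rule card_mono[rotated]) (rule int_fin[OF g1])
    then have "real (card A) \<le> real (card {a::int. c1 - sqrt (\<beta> + l) \<le> a/g1 \<and> a/g1 \<le> c1 + sqrt (\<beta> + l)})" by simp
    also have "\<dots> \<le> g1 * max 0 (c1 + sqrt (\<beta> + l) - (c1 - sqrt (\<beta> + l))) + 1" by (rule int_count[OF g1])
    also have "\<dots> = 2 * g1 * sqrt (\<beta> + l) + 1" using b0 l0 by (simp add: max_def)
    finally show ?thesis .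
  qed
  have cA2: "real (card A) \<le> 2 * g1 * r + 1"
  proof -
    have "A \<subseteq> {a::int. d1 - r \<le> a/g1 \<and> a/g1 \<le> d1 + r}" unfolding A_def by auto
    then have "card A \<le> card {a::int. d1 - r \<le> a/g1 \<and> a/g1 \<le> d1 + r}"
      by (rule card_mono[rotated]) (rule int_fin[OF g1])
    then have "real (card A) \<le> real (card {a::int. d1 - r \<le> a/g1 \<and> a/g1 \<le> d1 + r})" by simp
    also have "\<dots> \<le> g1 * max 0 (d1 + r - (d1 - r)) + 1" by (rule int_count[OF g1])
    also have "\<dots> = 2 * g1 * r + 1" using r0 by (simp add: max_def)
    finally show ?thesis .
  qed
  have "2 * g2 * \<Lambda> * real (card A) \<le> 2 * g2 * \<Lambda> * (2 * g1 * sqrt (\<beta> + l) + 1)"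
    using g2 L cA1 by (intro mult_left_mono) auto
  also have "\<dots> = 4 * g1 * g2 * (\<Lambda> * sqrt (\<beta> + l)) + 2 * g2 * \<Lambda>" by (simp add: algebra_simps)
  also have "\<dots> \<le> 4 * g1 * g2 * l + 2 * g2 * (l + 1)"
    using g1 g2 L by (intro add_mono mult_left_mono) auto
  finally have "2 * g2 * \<Lambda> * real (card A) \<le> 4 * g1 * g2 * l + 2 * g2 * (l + 1)" .
  with cT cA2 have "real (card T) \<le> 4*g1*g2*l + 2*g2*(l+1) + 4*g1*r + 2" by linarith
  moreover have "finite T" by (rule finite_subset[OF sub]) (use Afin fibfin in auto)
  ultimately show ?thesis unfolding T_def by blast
qed

definition Sset :: "real \<Rightarrow> real \<Rightarrow> real \<Rightarrow> real \<Rightarrow> real \<Rightarrow> int \<times> int \<Rightarrow> (int \<times> int) set" where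
  "Sset g1 g2 N2 l0 \<tau> m = {m1. knorm g1 g2 (m - m1) < 2 * N2 \<and>
      \<bar>\<tau> + (knorm g1 g2 m1)^2 + (knorm g1 g2 (m - m1))^2\<bar> < l0}"

lemma knorm_sq: "(knorm g1 g2 m)^2 = (of_int (fst m) / g1)^2 + (of_int (snd m) / g2)^2"
  unfolding knorm_def by simp

lemma knorm_ge1: "\<bar>of_int (fst m) / g1\<bar> \<le> knorm g1 g2 m"
  unfolding knorm_def by (metis real_sqrt_abs real_sqrt_le_mono le_add_same_cancel1 zero_le_power2)

lemma knorm_ge2: "\<bar>of_int (snd m) / g2\<bar> \<le> knorm g1 g2 m"
  unfolding knorm_def by (metis real_sqrt_abs real_sqrt_le_mono le_add_same_cancel2 zero_le_power2)

lemma Sset_ball: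
  assumes "m1 \<in> Sset g1 g2 N2 l0 \<tau> m"
  shows "\<bar>of_int (fst m1) / g1 - of_int (fst m) / g1\<bar> < 2 * N2"
    and "\<bar>of_int (snd m1) / g2 - of_int (snd m) / g2\<bar> < 2 * N2"
proof -
  have k: "knorm g1 g2 (m - m1) < 2 * N2" using assms unfolding Sset_def by auto
  have "\<bar>of_int (fst (m - m1)) / g1\<bar> < 2 * N2" using knorm_ge1[of "m - m1" g1 g2] k by linarith
  then show "\<bar>of_int (fst m1) / g1 - of_int (fst m) / g1\<bar> < 2 * N2"
    by (simp add: diff_divide_distrib abs_minus_commute)
  have "\<bar>of_int (snd (m - m1)) / g2\<bar> < 2 * N2" using knorm_ge2[of "m - m1" g2 g1] k by linarith
  then show "\<bar>of_int (snd m1) / g2 - of_int (snd m) / g2\<bar> < 2 * N2"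
    by (simp add: diff_divide_distrib abs_minus_commute)
qed

lemma Sset_ball_count:
  assumes g1: "g1 > 0" and g2: "g2 > 0" and N: "N2 \<ge> 0"
  shows "finite (Sset g1 g2 N2 l0 \<tau> m) \<and> real (card (Sset g1 g2 N2 l0 \<tau> m)) \<le> (4*g1*N2 + 1) * (4*g2*N2 + 1)"
proof -
  define A where "A = {a::int. of_int (fst m) / g1 - 2*N2 \<le> a/g1 \<and> a/g1 \<le> of_int (fst m) / g1 + 2*N2}"
  define B where "B = {b::int. of_int (snd m) / g2 - 2*N2 \<le> b/g2 \<and> b/g2 \<le> of_int (snd m) / g2 + 2*N2}"
  have sub: "Sset g1 g2 N2 l0 \<tau> m \<subseteq> A \<times> B"
  proof
    fix m1 assume h: "m1 \<in> Sset g1 g2 N2 l0 \<tau> m"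
    show "m1 \<in> A \<times> B" using Sset_ball[OF h] unfolding A_def B_def by (cases m1) auto
  qed
  have fA: "finite A" unfolding A_def by (rule int_fin[OF g1])
  have fB: "finite B" unfolding B_def by (rule int_fin[OF g2])
  have cA: "real (card A) \<le> 4*g1*N2 + 1"
    using int_count[OF g1, of "of_int (fst m) / g1 - 2*N2" "of_int (fst m) / g1 + 2*N2"] N
    unfolding A_def by (simp add: max_def)
  have cB: "real (card B) \<le> 4*g2*N2 + 1"
    using int_count[OF g2, of "of_int (snd m) / g2 - 2*N2" "of_int (snd m) / g2 + 2*N2"] N
    unfolding B_def by (simp add: max_def)
  have "card (Sset g1 g2 N2 l0 \<tau> m) \<le> card (A \<times> B)" by (rule card_mono[OF _ sub]) (use fA fB in simp)
  then have "card (Sset g1 g2 N2 l0 \<tau> m) \<le> card A * card B" by (simp add: card_cartesian_product)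
  then have "real (card (Sset g1 g2 N2 l0 \<tau> m)) \<le> real (card A) * real (card B)"
    by (simp only: of_nat_mult[symmetric] of_nat_le_iff)
  also have "\<dots> \<le> (4*g1*N2 + 1) * (4*g2*N2 + 1)" using cA cB by (intro mult_mono) auto
  finally show ?thesis using finite_subset[OF sub] fA fB by auto
qed

lemma Sset_ann_count:
  assumes g1: "g1 > 0" and g2: "g2 > 0" and N: "N2 \<ge> 0" and l0: "l0 \<ge> 0"
  shows "real (card (Sset g1 g2 N2 l0 \<tau> m)) \<le> 8*g1*g2*l0 + 2*(g1+g2)*(l0+1) + 8*(g1+g2)*N2 + 4"
proof -
  obtain p q where m: "m = (p, q)" by (cases m)
  define c1 where "c1 = of_int p / (2*g1)"
  define c2 where "c2 = of_int q / (2*g2)"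
  define K0 where "K0 = ((of_int p / g1)^2 + (of_int q / g2)^2) / 2"
  define \<alpha> where "\<alpha> = (- \<tau> - K0 - l0) / 2"
  define r where "r = 2 * N2"
  define H1 where "H1 = {(a::int,b::int). \<bar>a/g1 - of_int p / g1\<bar> < r \<and> \<alpha> < (a/g1-c1)^2 + (b/g2-c2)^2
     \<and> (a/g1-c1)^2 + (b/g2-c2)^2 < \<alpha> + l0 \<and> (a/g1-c1)^2 \<le> (b/g2-c2)^2}"
  define H2 where "H2 = {(a::int,b::int). \<bar>a/g2 - of_int q / g2\<bar> < r \<and> \<alpha> < (a/g2-c2)^2 + (b/g1-c1)^2
     \<and> (a/g2-c2)^2 + (b/g1-c1)^2 < \<alpha> + l0 \<and> (a/g2-c2)^2 \<le> (b/g1-c1)^2}"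
  have r0: "r \<ge> 0" using N unfolding r_def by simp
  from half_count[OF g1 g2 l0 r0, of "of_int p / g1" \<alpha> c1 c2]
  have h1: "finite H1" "real (card H1) \<le> 4*g1*g2*l0 + 2*g2*(l0+1) + 4*g1*r + 2" unfolding H1_def by auto
  from half_count[OF g2 g1 l0 r0, of "of_int q / g2" \<alpha> c2 c1]
  have h2: "finite H2" "real (card H2) \<le> 4*g2*g1*l0 + 2*g1*(l0+1) + 4*g2*r + 2" unfolding H2_def by auto
  have sub: "Sset g1 g2 N2 l0 \<tau> m \<subseteq> H1 \<union> prod.swap ` H2"
  proof
    fix m1 assume h: "m1 \<in> Sset g1 g2 N2 l0 \<tau> m"
    obtain a b where m1: "m1 = (a, b)" by (cases m1)
    have ball: "\<bar>a/g1 - of_int p / g1\<bar> < r" "\<bar>b/g2 - of_int q / g2\<bar> < r"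
      using Sset_ball[OF h] m m1 unfolding r_def by auto
    have id: "(knorm g1 g2 m1)^2 + (knorm g1 g2 (m - m1))^2 = 2 * ((a/g1-c1)^2 + (b/g2-c2)^2) + K0"
      unfolding knorm_sq m m1 c1_def c2_def K0_def using g1 g2
      by (simp add: field_simps power2_eq_square)
    have "\<bar>\<tau> + (knorm g1 g2 m1)^2 + (knorm g1 g2 (m - m1))^2\<bar> < l0" using h unfolding Sset_def by auto
    then have "\<bar>\<tau> + (2 * ((a/g1-c1)^2 + (b/g2-c2)^2) + K0)\<bar> < l0" using id by (simp add: add.assoc)
    then have ann: "\<alpha> < (a/g1-c1)^2 + (b/g2-c2)^2" "(a/g1-c1)^2 + (b/g2-c2)^2 < \<alpha> + l0"
      unfolding \<alpha>_def by (auto simp: abs_less_iff field_simps)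
    show "m1 \<in> H1 \<union> prod.swap ` H2"
    proof (cases "(a/g1-c1)^2 \<le> (b/g2-c2)^2")
      case True then have "m1 \<in> H1" using ball ann m1 unfolding H1_def by auto
      then show ?thesis by blast
    next
      case False
      then have "(b, a) \<in> H2" using ball ann unfolding H2_def by (auto simp: add.commute)
      then have "prod.swap (b, a) \<in> prod.swap ` H2" by blast
      then show ?thesis using m1 by simp
    qed
  qed
  have "card (Sset g1 g2 N2 l0 \<tau> m) \<le> card (H1 \<union> prod.swap ` H2)"
    by (rule card_mono[OF _ sub]) (use h1 h2 in simp)
  also have "\<dots> \<le> card H1 + card (prod.swap ` H2)" by (rule card_Un_le)
  also have "card (prod.swap ` H2) = card H2" by (rule card_image) simp
  finally have "real (card (Sset g1 g2 N2 l0 \<tau> m)) \<le> real (card H1) + real (card H2)" by linarith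
  also have "\<dots> \<le> 8*g1*g2*l0 + 2*(g1+g2)*(l0+1) + 8*(g1+g2)*N2 + 4"
    using h1(2) h2(2) unfolding r_def by (simp add: algebra_simps)
  finally show ?thesis .
qed

definition sp :: "real \<Rightarrow> real \<Rightarrow> real \<Rightarrow> real \<Rightarrow> real \<Rightarrow> int \<times> int \<Rightarrow> bool" where
  "sp g1 g2 N L t m \<longleftrightarrow> knorm g1 g2 m < 2 * N \<and> \<bar>t + (knorm g1 g2 m)^2\<bar> < 2 * L"

lemma interval_meas:
  fixes A w :: real assumes "w \<ge> 0"
  shows "(\<integral>\<^sup>+ t. indicator {t. \<bar>t + A\<bar> < w} t \<partial>lborel) = ennreal (2 * w)"
proof -
  have "{t. \<bar>t + A\<bar> < w} = {- A - w <..< - A + w}" by (auto simp: abs_less_iff)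
  then show ?thesis using assms by simp
qed

lemma interval_meas2:
  fixes B w \<tau> :: real assumes "w \<ge> 0"
  shows "(\<integral>\<^sup>+ t. indicator {t. \<bar>\<tau> - t + B\<bar> < w} t \<partial>lborel) = ennreal (2 * w)"
proof -
  have "{t. \<bar>\<tau> - t + B\<bar> < w} = {\<tau> + B - w <..< \<tau> + B + w}" by (auto simp: abs_less_iff)
  then show ?thesis using assms by simp
qed

lemma inner_bound:
  assumes L1: "L1 \<ge> 0" and L2: "L2 \<ge> 0"
  shows "(\<integral>\<^sup>+ \<tau>1. indicator {t. sp g1 g2 N1 L1 t m1} \<tau>1 * indicator {t. sp g1 g2 N2 L2 t (m - m1)} (\<tau> - \<tau>1) \<partial>lborel)
    \<le> ennreal (4 * min L1 L2) * indicator (Sset g1 g2 N2 (2*(L1+L2)) \<tau> m) m1"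
proof (cases "m1 \<in> Sset g1 g2 N2 (2*(L1+L2)) \<tau> m")
  case False
  have z: "indicator {t. sp g1 g2 N1 L1 t m1} \<tau>1 * indicator {t. sp g1 g2 N2 L2 t (m - m1)} (\<tau> - \<tau>1) = (0::ennreal)" for \<tau>1
  proof (rule ccontr)
    assume "indicator {t. sp g1 g2 N1 L1 t m1} \<tau>1 * indicator {t. sp g1 g2 N2 L2 t (m - m1)} (\<tau> - \<tau>1) \<noteq> (0::ennreal)"
    then have "sp g1 g2 N1 L1 \<tau>1 m1" "sp g1 g2 N2 L2 (\<tau> - \<tau>1) (m - m1)" by (auto simp: indicator_def split: if_splits)
    then have "m1 \<in> Sset g1 g2 N2 (2*(L1+L2)) \<tau> m" unfolding sp_def Sset_def by (auto simp: abs_less_iff)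
    with False show False by simp
  qed
  have "(\<integral>\<^sup>+ \<tau>1. indicator {t. sp g1 g2 N1 L1 t m1} \<tau>1 * indicator {t. sp g1 g2 N2 L2 t (m - m1)} (\<tau> - \<tau>1) \<partial>lborel)
     = 0" by (simp only: z) simp
  then show ?thesis using False by simp
next
  case True
  have "(\<integral>\<^sup>+ \<tau>1. indicator {t. sp g1 g2 N1 L1 t m1} \<tau>1 * indicator {t. sp g1 g2 N2 L2 t (m - m1)} (\<tau> - \<tau>1) \<partial>lborel)
     \<le> (\<integral>\<^sup>+ t. indicator {t. \<bar>t + (knorm g1 g2 m1)^2\<bar> < 2 * L1} t \<partial>lborel)"
    by (intro nn_integral_mono) (auto simp: indicator_def sp_def)
  also have "\<dots> = ennreal (4 * L1)" using interval_meas[of "2*L1"] L1 by simp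
  finally have b1: "(\<integral>\<^sup>+ \<tau>1. indicator {t. sp g1 g2 N1 L1 t m1} \<tau>1 * indicator {t. sp g1 g2 N2 L2 t (m - m1)} (\<tau> - \<tau>1) \<partial>lborel) \<le> ennreal (4 * L1)" .
  have "(\<integral>\<^sup>+ \<tau>1. indicator {t. sp g1 g2 N1 L1 t m1} \<tau>1 * indicator {t. sp g1 g2 N2 L2 t (m - m1)} (\<tau> - \<tau>1) \<partial>lborel)
     \<le> (\<integral>\<^sup>+ t. indicator {t. \<bar>\<tau> - t + (knorm g1 g2 (m - m1))^2\<bar> < 2 * L2} t \<partial>lborel)"
    by (intro nn_integral_mono) (auto simp: indicator_def sp_def)
  also have "\<dots> = ennreal (4 * L2)" using interval_meas2[of "2*L2"] L2 by simp
  finally have b2: "(\<integral>\<^sup>+ \<tau>1. indicator {t. sp g1 g2 N1 L1 t m1} \<tau>1 * indicator {t. sp g1 g2 N2 L2 t (m - m1)} (\<tau> - \<tau>1) \<partial>lborel) \<le> ennreal (4 * L2)" .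
  have "ennreal (4 * min L1 L2) = min (ennreal (4 * L1)) (ennreal (4 * L2))"
    by (simp add: min_def ennreal_le_iff2 ennreal_leI) (metis ennreal_leI linorder_not_le mult_le_cancel_left_pos order.strict_implies_order zero_less_numeral ennreal_le_iff L1 L2 mult_nonneg_nonneg zero_le_numeral antisym)
  then show ?thesis using b1 b2 True by simp
qed

lemma X_bound:
  assumes g1: "g1 > 0" and g2: "g2 > 0" and N: "N2 \<ge> 0" and L1: "L1 \<ge> 0" and L2: "L2 \<ge> 0"
  shows "(\<integral>\<^sup>+ m1. (\<integral>\<^sup>+ \<tau>1. indicator {t. sp g1 g2 N1 L1 t m1} \<tau>1 * indicator {t. sp g1 g2 N2 L2 t (m - m1)} (\<tau> - \<tau>1) \<partial>lborel) \<partial>count_space UNIV)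
    \<le> ennreal (4 * min L1 L2 * real (card (Sset g1 g2 N2 (2*(L1+L2)) \<tau> m)))"
proof -
  have fin: "finite (Sset g1 g2 N2 (2*(L1+L2)) \<tau> m)" using Sset_ball_count[OF g1 g2 N] by blast
  have "(\<integral>\<^sup>+ m1. (\<integral>\<^sup>+ \<tau>1. indicator {t. sp g1 g2 N1 L1 t m1} \<tau>1 * indicator {t. sp g1 g2 N2 L2 t (m - m1)} (\<tau> - \<tau>1) \<partial>lborel) \<partial>count_space UNIV)
    \<le> (\<integral>\<^sup>+ m1. ennreal (4 * min L1 L2) * indicator (Sset g1 g2 N2 (2*(L1+L2)) \<tau> m) m1 \<partial>count_space UNIV)"
    by (intro nn_integral_mono inner_bound L1 L2)
  also have "\<dots> = ennreal (4 * min L1 L2) * of_nat (card (Sset g1 g2 N2 (2*(L1+L2)) \<tau> m))"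
    using fin by (subst nn_integral_cmult) auto
  also have "\<dots> = ennreal (4 * min L1 L2 * real (card (Sset g1 g2 N2 (2*(L1+L2)) \<tau> m)))"
    using L1 L2 by (simp add: ennreal_mult ennreal_of_nat_eq_real_of_nat)
  finally show ?thesis .
qed

lemma split_powr: "x > 0 \<Longrightarrow> x = x powr (1 - a) * x powr (a::real)"
  by (simp add: powr_add[symmetric])

lemma sq_powr: "(N::real) \<ge> 0 \<Longrightarrow> (N^2) powr a = N powr (2*a)"
proof -
  assume "N \<ge> 0"
  then have "N^2 = N powr 2" by simp
  then show ?thesis by (simp add: powr_powr)
qed

lemma p4_powr: "(N::real) \<ge> 0 \<Longrightarrow> (N^4) powr a = N powr (4*a)"
proof -
  assume "N \<ge> 0"
  then have "N^4 = N powr 4" by simp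
  then show ?thesis by (simp add: powr_powr)
qed

lemma claim_ineq:
  fixes x y N e :: real
  assumes x: "1 \<le> x" and xy: "x \<le> y" and N: "1 \<le> N" and e: "0 < e" "e \<le> 1/4"
  shows "x * min (N^2) (y + N) \<le> 2 * ((x*y) powr (1 - 2*e) * N powr (8*e) + x * N powr (1 + 4*e))"
proof -
  have y: "1 \<le> y" using x xy by linarith
  have R1: "0 \<le> (x*y) powr (1 - 2*e) * N powr (8*e)" by simp
  have R2: "0 \<le> x * N powr (1 + 4*e)" using x by simp
  consider "y \<le> N" | "N^2 \<le> y" | "N < y" "y < N^2" by linarith
  then show ?thesis
  proof cases
    case 1
    have "x * min (N^2) (y + N) \<le> x * (y + N)" using x by (intro mult_left_mono) auto
    also have "\<dots> \<le> x * (2 * N)" using x 1 by (intro mult_left_mono) auto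
    finally have a: "x * min (N^2) (y + N) \<le> x * (2 * N)" .
    have "N \<le> N powr (1 + 4*e)"
      using powr_mono[of 1 "1 + 4*e" N] N e by simp
    then have "x * (2 * N) \<le> 2 * (x * N powr (1 + 4*e))" using x by simp
    with a show ?thesis unfolding distrib_left using R1 by linarith
  next
    case 2
    have a1: "x * min (N^2) (y + N) \<le> x * N^2" using x by (intro mult_left_mono) auto
    have "x powr (2*e) \<le> y powr (2*e)" using x xy e by (intro powr_mono2) auto
    then have a2: "x \<le> x powr (1 - 2*e) * y powr (2*e)"
    proof -
      assume h: "x powr (2*e) \<le> y powr (2*e)"
      have "x = x powr (1 - 2*e) * x powr (2*e)" using split_powr[of x "2*e"] x by simp
      also have "\<dots> \<le> x powr (1 - 2*e) * y powr (2*e)" using h by (rule mult_left_mono) simp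
      finally show ?thesis .
    qed
    have "(N^2) powr (1 - 4*e) \<le> y powr (1 - 4*e)" using N 2 e by (intro powr_mono2) auto
    then have a3: "N^2 \<le> y powr (1 - 4*e) * N powr (8*e)"
    proof -
      assume h: "(N^2) powr (1 - 4*e) \<le> y powr (1 - 4*e)"
      have "N^2 = (N^2) powr (1 - 4*e) * (N^2) powr (4*e)" using split_powr[of "N^2" "4*e"] N by simp
      also have "\<dots> \<le> y powr (1 - 4*e) * (N^2) powr (4*e)" using h by (rule mult_right_mono) simp
      also have "(N^2) powr (4*e) = N powr (8*e)" using sq_powr[of N "4*e"] N by simp
      finally show ?thesis .
    qed
    have "x * N^2 \<le> (x powr (1 - 2*e) * y powr (2*e)) * (y powr (1 - 4*e) * N powr (8*e))"
      using a2 a3 x by (intro mult_mono) auto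
    also have "\<dots> = x powr (1 - 2*e) * (y powr (2*e) * y powr (1 - 4*e)) * N powr (8*e)" by (simp add: mult_ac)
    also have "y powr (2*e) * y powr (1 - 4*e) = y powr (1 - 2*e)" by (simp add: powr_add[symmetric])
    also have "x powr (1 - 2*e) * y powr (1 - 2*e) * N powr (8*e) = (x*y) powr (1 - 2*e) * N powr (8*e)"
      by (simp add: powr_mult)
    finally have "x * min (N^2) (y + N) \<le> (x*y) powr (1 - 2*e) * N powr (8*e)" using a1 by linarith
    then show ?thesis unfolding distrib_left using R1 R2 by linarith
  next
    case 3
    have "x * min (N^2) (y + N) \<le> x * (y + N)" using x by (intro mult_left_mono) auto
    also have "\<dots> \<le> 2 * (x * y)" using x 3 by (simp add: algebra_simps)
    finally have a1: "x * min (N^2) (y + N) \<le> 2 * (x * y)" .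
    have "(x*y) powr (2*e) \<le> (N^4) powr (2*e)"
    proof (rule powr_mono2)
      have "x * y \<le> y * y" using xy y by (intro mult_right_mono) auto
      also have "\<dots> \<le> N^2 * N^2" using 3 y by (intro mult_mono) auto
      finally show "x * y \<le> N^4" by (simp add: power2_eq_square power4_eq_xxxx mult_ac)
    qed (use e x y in auto)
    then have "(x*y) powr (2*e) \<le> N powr (8*e)" using p4_powr[of N "2*e"] N by simp
    then have "x * y \<le> (x*y) powr (1 - 2*e) * N powr (8*e)"
    proof -
      assume h: "(x*y) powr (2*e) \<le> N powr (8*e)"
      have "x * y = (x*y) powr (1 - 2*e) * (x*y) powr (2*e)" using split_powr[of "x*y" "2*e"] x y by simp
      also have "\<dots> \<le> (x*y) powr (1 - 2*e) * N powr (8*e)" using h by (rule mult_left_mono) simp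
      finally show ?thesis .
    qed
    with a1 have "x * min (N^2) (y + N) \<le> 2 * ((x*y) powr (1 - 2*e) * N powr (8*e))" by linarith
    then show ?thesis unfolding distrib_left using R2 by linarith
  qed
qed

definition Kc :: "real \<Rightarrow> real \<Rightarrow> real" where
  "Kc g1 g2 = 32*g1*g2 + 18*(g1+g2) + 4 + (4*g1+1)*(4*g2+1)"

lemma Kc_pos: "g1 > 0 \<Longrightarrow> g2 > 0 \<Longrightarrow> Kc g1 g2 > 0"
  unfolding Kc_def by (simp add: add_pos_pos)

lemma card_S_bound:
  assumes g1: "g1 > 0" and g2: "g2 > 0" and L1: "L1 \<ge> 1" and L2: "L2 \<ge> 1" and N: "N2 \<ge> 1"
  shows "real (card (Sset g1 g2 N2 (2*(L1+L2)) \<tau> m)) \<le> Kc g1 g2 * min (N2^2) (max L1 L2 + N2)"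
proof -
  let ?c = "real (card (Sset g1 g2 N2 (2*(L1+L2)) \<tau> m))"
  have ball: "?c \<le> (4*g1*N2 + 1) * (4*g2*N2 + 1)" using Sset_ball_count[OF g1 g2] N by auto
  also have "\<dots> \<le> (4*g1*N2 + N2) * (4*g2*N2 + N2)" using N g1 g2 by (intro mult_mono) auto
  also have "\<dots> = (4*g1+1)*(4*g2+1) * N2^2" by (simp add: algebra_simps power2_eq_square)
  also have "\<dots> \<le> Kc g1 g2 * N2^2" unfolding Kc_def using g1 g2 by (intro mult_right_mono) auto
  finally have c1: "?c \<le> Kc g1 g2 * N2^2" .
  have "?c \<le> 8*g1*g2*(2*(L1+L2)) + 2*(g1+g2)*(2*(L1+L2)+1) + 8*(g1+g2)*N2 + 4"
    using Sset_ann_count[OF g1 g2, of N2 "2*(L1+L2)" \<tau> m] N L1 L2 by auto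
  also have "\<dots> \<le> (32*g1*g2 + 18*(g1+g2) + 4) * (max L1 L2 + N2)"
  proof -
    have A: "2*(L1+L2) \<le> 4 * max L1 L2" by (simp add: max_def)
    have B: "1 \<le> max L1 L2" using L1 by (simp add: max_def)
    have "8*g1*g2*(2*(L1+L2)) \<le> 8*g1*g2*(4 * max L1 L2)" using A g1 g2 by (intro mult_left_mono) auto
    moreover have "2*(g1+g2)*(2*(L1+L2)+1) \<le> 2*(g1+g2)*(5 * max L1 L2)" using A B g1 g2 by (intro mult_left_mono) auto
    moreover have "(4::real) \<le> 4 * max L1 L2" using B by linarith
    moreover have "0 \<le> g1*g2*N2" "0 \<le> (g1+g2) * max L1 L2" "0 \<le> g1*g2*max L1 L2"
      "0 \<le> g1*N2" "0 \<le> g2*N2" "0 \<le> g1 * max L1 L2" "0 \<le> g2 * max L1 L2" "0 \<le> N2"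
      using g1 g2 N B by auto
    ultimately show ?thesis by (simp add: algebra_simps)
  qed
  also have "\<dots> \<le> Kc g1 g2 * (max L1 L2 + N2)"
    unfolding Kc_def using g1 g2 N L1 by (intro mult_right_mono) auto
  finally have c2: "?c \<le> Kc g1 g2 * (max L1 L2 + N2)" .
  show ?thesis using c1 c2 by (simp add: min_def)
qed

lemma powr_sq: "(x::real) > 0 \<Longrightarrow> (x powr a)^2 = x powr (2*a)"
  by (simp add: powr_power)

lemma M_final:
  assumes g1: "g1 > 0" and g2: "g2 > 0" and e: "0 < e" "e \<le> 1/4"
    and L1: "L1 \<ge> 1" and L2: "L2 \<ge> 1" and N: "N2 \<ge> 1"
  shows "(\<integral>\<^sup>+ m1. (\<integral>\<^sup>+ \<tau>1. indicator {t. sp g1 g2 N1 L1 t m1} \<tau>1 * indicator {t. sp g1 g2 N2 L2 t (m - m1)} (\<tau> - \<tau>1) \<partial>lborel) \<partial>count_space UNIV)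
    \<le> ennreal (8 * Kc g1 g2 * (L1 powr (1/2-e) * (N2 powr (4*e) * L2 powr (1/2-e) + N2 powr (1/2+2*e) * L2 powr e))^2)"
proof -
  define x where "x = min L1 L2"
  define y where "y = max L1 L2"
  have x1: "1 \<le> x" "x \<le> y" unfolding x_def y_def using L1 L2 by auto
  have xy: "x * y = L1 * L2" unfolding x_def y_def by (simp add: min_def max_def mult.commute)
  have Kp: "Kc g1 g2 > 0" using Kc_pos g1 g2 .
  let ?c = "real (card (Sset g1 g2 N2 (2*(L1+L2)) \<tau> m))"
  have X0: "(\<integral>\<^sup>+ m1. (\<integral>\<^sup>+ \<tau>1. indicator {t. sp g1 g2 N1 L1 t m1} \<tau>1 * indicator {t. sp g1 g2 N2 L2 t (m - m1)} (\<tau> - \<tau>1) \<partial>lborel) \<partial>count_space UNIV)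
      \<le> ennreal (4 * x * ?c)" using X_bound[OF g1 g2, of N2 L1 L2 N1 m \<tau>] N L1 L2 unfolding x_def by auto
  define P where "P = (L1*L2) powr (1 - 2*e) * N2 powr (8*e)"
  define Q where "Q = N2 powr (1 + 4*e)"
  define W where "W = L1 powr (1/2-e) * (N2 powr (4*e) * L2 powr (1/2-e) + N2 powr (1/2+2*e) * L2 powr e)"
  have s1: "4 * x * ?c \<le> 4 * Kc g1 g2 * (x * min (N2^2) (y + N2))"
  proof -
    have "4 * x * ?c \<le> 4 * x * (Kc g1 g2 * min (N2^2) (y + N2))"
      using card_S_bound[OF g1 g2 L1 L2 N, of \<tau> m] x1 unfolding y_def by (intro mult_left_mono) auto
    then show ?thesis by (simp add: mult_ac)
  qed
  have s2: "x * min (N2^2) (y + N2) \<le> 2 * (P + x * Q)"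
    using claim_ineq[OF x1 N e] unfolding P_def Q_def xy .
  have s3: "x \<le> L1 powr (1 - 2*e) * L2 powr (2*e)"
  proof -
    have "x = x powr (1 - 2*e) * x powr (2*e)" using split_powr[of x "2*e"] x1 by simp
    also have "\<dots> \<le> L1 powr (1 - 2*e) * L2 powr (2*e)"
      using x1 e unfolding x_def by (intro mult_mono powr_mono2) auto
    finally show ?thesis .
  qed
  have Q0: "0 \<le> Q" unfolding Q_def by simp
  have s4: "P + L1 powr (1 - 2*e) * L2 powr (2*e) * Q
      = (L1 powr (1/2-e) * (N2 powr (4*e) * L2 powr (1/2-e)))^2 + (L1 powr (1/2-e) * (N2 powr (1/2+2*e) * L2 powr e))^2"
    unfolding P_def Q_def using L1 L2 N by (simp add: power_mult_distrib powr_sq powr_mult mult_ac algebra_simps)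
  have s5: "(L1 powr (1/2-e) * (N2 powr (4*e) * L2 powr (1/2-e)))^2 + (L1 powr (1/2-e) * (N2 powr (1/2+2*e) * L2 powr e))^2 \<le> W^2"
    unfolding W_def by (simp add: power2_sum distrib_left)
  have "x * Q \<le> L1 powr (1 - 2*e) * L2 powr (2*e) * Q" using s3 Q0 by (rule mult_right_mono)
  then have s6: "2 * (P + x * Q) \<le> 2 * (P + L1 powr (1 - 2*e) * L2 powr (2*e) * Q)" by simp
  have "x * min (N2^2) (y + N2) \<le> 2 * W^2"
  proof -
    note s2
    also note s6
    also have "2 * (P + L1 powr (1 - 2*e) * L2 powr (2*e) * Q) \<le> 2 * W^2" unfolding s4 by (rule mult_left_mono[OF s5]) simp
    finally show ?thesis .
  qed
  then have "4 * Kc g1 g2 * (x * min (N2^2) (y + N2)) \<le> 4 * Kc g1 g2 * (2 * W^2)"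
    using Kp by (intro mult_left_mono) auto
  from order_trans[OF s1 this] have R: "4 * x * ?c \<le> 8 * Kc g1 g2 * W^2" by simp
  show ?thesis using order_trans[OF X0 ennreal_leI[OF R[unfolded W_def]]] .
qed

lemma infinite_UNIV_intint: "infinite (UNIV :: (int \<times> int) set)"
  by (simp add: infinite_UNIV_char_0 finite_prod)

lemma count_sum_nat:
  fixes g :: "int \<times> int \<Rightarrow> ennreal"
  shows "(\<integral>\<^sup>+ i. g i \<partial>count_space UNIV) = (\<Sum>n. g (from_nat_into UNIV n))"
proof -
  have b: "bij_betw (from_nat_into (UNIV :: (int \<times> int) set)) UNIV UNIV"
    by (rule bij_betw_from_nat_into) (simp_all add: infinite_UNIV_intint)
  show ?thesis
    by (simp add: nn_integral_bij_count_space[OF b, symmetric] nn_integral_count_space_nat)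
qed

lemma count_meas:
  fixes f :: "int \<times> int \<Rightarrow> 'a \<Rightarrow> ennreal"
  assumes "\<And>i. f i \<in> borel_measurable M"
  shows "(\<lambda>x. \<integral>\<^sup>+ i. f i x \<partial>count_space UNIV) \<in> borel_measurable M"
  unfolding count_sum_nat using assms by measurable

lemma conv_meas:
  assumes "\<And>m. (\<lambda>\<tau>. a \<tau> m) \<in> borel_measurable lborel" "\<And>m. (\<lambda>\<tau>. b \<tau> m) \<in> borel_measurable lborel"
  shows "(\<lambda>\<tau>. conv a b \<tau> m) \<in> borel_measurable lborel"
  unfolding conv_def by (rule count_meas) (rule inner_meas; fact)

lemma Qn_mono: "(\<And>\<tau> m. f \<tau> m \<le> g \<tau> m) \<Longrightarrow> Qn f \<le> Qn g"
  unfolding Qn_def by (intro nn_integral_mono power_mono_ennreal)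

definition QS :: "efun \<Rightarrow> ennreal" where "QS h = enn_sqrt (Qn h)"

lemma QS_mono: "(\<And>\<tau> m. f \<tau> m \<le> g \<tau> m) \<Longrightarrow> QS f \<le> QS g"
  unfolding QS_def by (intro enn_sqrt_mono Qn_mono)

lemma QS_suminf:
  assumes "\<And>i m. (\<lambda>\<tau>. h i \<tau> m) \<in> borel_measurable lborel"
  shows "QS (\<lambda>\<tau> m. \<Sum>i. h i \<tau> m) \<le> (\<Sum>i. QS (h i))"
  unfolding QS_def enn_sqrt_le_iff by (rule Qn_suminf[OF assms])

lemma swap_order:
  fixes h :: efun
  assumes "\<And>m. (\<lambda>\<tau>. h \<tau> m) \<in> borel_measurable lborel"
  shows "(\<integral>\<^sup>+ \<tau>. (\<integral>\<^sup>+ m. h \<tau> m \<partial>count_space UNIV) \<partial>lborel) = (\<integral>\<^sup>+ m. (\<integral>\<^sup>+ \<tau>. h \<tau> m \<partial>lborel) \<partial>count_space UNIV)"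
  by (rule nn_integral_count_space_nn_integral) (simp, rule assms)

lemma L2norm_eq:
  assumes g: "g1 > 0" "g2 > 0" and mF: "\<And>m. (\<lambda>\<tau>. nnf F \<tau> m) \<in> borel_measurable lborel"
  shows "L2norm g1 g2 F = enn_sqrt (ennreal (cst g1 g2)) * QS (nnf F)"
proof -
  have "(\<integral>\<^sup>+ \<tau>. (\<integral>\<^sup>+ m. ennreal ((cmod (F \<tau> m))^2) \<partial>count_space UNIV) \<partial>lborel)
      = (\<integral>\<^sup>+ \<tau>. (\<integral>\<^sup>+ m. (nnf F \<tau> m)^2 \<partial>count_space UNIV) \<partial>lborel)"
    unfolding nnf_def by (simp add: ennreal_power)
  also have "\<dots> = Qn (nnf F)" unfolding Qn_def by (rule swap_order) (use mF in simp)
  finally show ?thesis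
    unfolding L2norm_def QS_def cst_def[symmetric] by (simp add: enn_sqrt_mult)
qed

lemma nnf_meas:
  assumes "\<And>m. (\<lambda>\<tau>. F \<tau> m) \<in> borel_measurable lborel"
  shows "(\<lambda>\<tau>. nnf F \<tau> m) \<in> borel_measurable lborel"
  unfolding nnf_def using assms[of m] by measurable

lemma LHS_bound:
  assumes g: "g1 > 0" "g2 > 0"
    and m1: "\<And>m. (\<lambda>\<tau>. F1 \<tau> m) \<in> borel_measurable lborel"
    and m2: "\<And>m. (\<lambda>\<tau>. F2 \<tau> m) \<in> borel_measurable lborel"
  shows "L2norm g1 g2 (prod_ft g1 g2 F1 F2) \<le> (enn_sqrt (ennreal (cst g1 g2)))^3 * QS (conv (nnf F1) (nnf F2))"
proof -
  let ?c = "ennreal (cst g1 g2)"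
  let ?C = "conv (nnf F1) (nnf F2)"
  have cm: "(\<lambda>\<tau>. ?C \<tau> m) \<in> borel_measurable lborel" for m
    by (rule conv_meas) (rule nnf_meas, fact)+
  have cm2[measurable]: "(\<lambda>\<tau>. (?C \<tau> m)^2) \<in> borel_measurable lborel" for m using cm[of m] by measurable
  have "(\<integral>\<^sup>+ \<tau>. (\<integral>\<^sup>+ m. ennreal ((cmod (prod_ft g1 g2 F1 F2 \<tau> m))^2) \<partial>count_space UNIV) \<partial>lborel)
      = (\<integral>\<^sup>+ \<tau>. (\<integral>\<^sup>+ m. (nnf (prod_ft g1 g2 F1 F2) \<tau> m)^2 \<partial>count_space UNIV) \<partial>lborel)"
    unfolding nnf_def by (simp add: ennreal_power)
  also have "\<dots> \<le> (\<integral>\<^sup>+ \<tau>. (\<integral>\<^sup>+ m. ?c^2 * (?C \<tau> m)^2 \<partial>count_space UNIV) \<partial>lborel)"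
    by (intro nn_integral_mono) (metis power_mono_ennreal prod_bound[OF g] power_mult_distrib)
  also have "\<dots> = (\<integral>\<^sup>+ \<tau>. ?c^2 * (\<integral>\<^sup>+ m. (?C \<tau> m)^2 \<partial>count_space UNIV) \<partial>lborel)"
    by (intro nn_integral_cong nn_integral_cmult) simp
  also have "\<dots> = ?c^2 * (\<integral>\<^sup>+ \<tau>. (\<integral>\<^sup>+ m. (?C \<tau> m)^2 \<partial>count_space UNIV) \<partial>lborel)"
    by (rule nn_integral_cmult) (rule count_meas, rule cm2)
  also have "\<dots> = ?c^2 * Qn ?C"
    unfolding Qn_def by (subst swap_order) (rule cm2, rule refl)
  finally have I: "(\<integral>\<^sup>+ \<tau>. (\<integral>\<^sup>+ m. ennreal ((cmod (prod_ft g1 g2 F1 F2 \<tau> m))^2) \<partial>count_space UNIV) \<partial>lborel) \<le> ?c^2 * Qn ?C" .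
  have "L2norm g1 g2 (prod_ft g1 g2 F1 F2) \<le> enn_sqrt (?c * (?c^2 * Qn ?C))"
    unfolding L2norm_def cst_def[symmetric] by (intro enn_sqrt_mono mult_left_mono I) simp
  also have "\<dots> = (enn_sqrt ?c)^3 * QS ?C"
    unfolding QS_def enn_sqrt_mult by (simp add: power3_eq_cube power2_eq_square enn_sqrt_mult mult_ac)
  finally show ?thesis .
qed

lemma QS_suminf4:
  fixes H :: "nat \<Rightarrow> nat \<Rightarrow> nat \<Rightarrow> nat \<Rightarrow> efun"
  assumes mH[measurable]: "\<And>a b c d m. (\<lambda>\<tau>. H a b c d \<tau> m) \<in> borel_measurable lborel"
  shows "QS (\<lambda>\<tau> m. \<Sum>a. \<Sum>b. \<Sum>c. \<Sum>d. H a b c d \<tau> m) \<le> (\<Sum>a. \<Sum>b. \<Sum>c. \<Sum>d. QS (H a b c d))"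
proof -
  have "QS (\<lambda>\<tau> m. \<Sum>a. \<Sum>b. \<Sum>c. \<Sum>d. H a b c d \<tau> m) \<le> (\<Sum>a. QS (\<lambda>\<tau> m. \<Sum>b. \<Sum>c. \<Sum>d. H a b c d \<tau> m))"
    by (rule QS_suminf) measurable
  also have "\<dots> \<le> (\<Sum>a. \<Sum>b. QS (\<lambda>\<tau> m. \<Sum>c. \<Sum>d. H a b c d \<tau> m))"
    by (intro suminf_le summableI allI QS_suminf) measurable
  also have "\<dots> \<le> (\<Sum>a. \<Sum>b. \<Sum>c. QS (\<lambda>\<tau> m. \<Sum>d. H a b c d \<tau> m))"
    by (intro suminf_le summableI allI QS_suminf) measurable
  also have "\<dots> \<le> (\<Sum>a. \<Sum>b. \<Sum>c. \<Sum>d. QS (H a b c d))"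
    by (intro suminf_le summableI allI QS_suminf) measurable
  finally show ?thesis .
qed

lemma conv_decomp:
  assumes b: "bump \<eta>"
    and m1: "\<And>m. (\<lambda>\<tau>. F1 \<tau> m) \<in> borel_measurable lborel"
    and m2: "\<And>m. (\<lambda>\<tau>. F2 \<tau> m) \<in> borel_measurable lborel"
  shows "conv (nnf F1) (nnf F2) \<tau> m \<le> (\<Sum>j1. \<Sum>l1. \<Sum>j2. \<Sum>l2.
     conv (nnf (PS g1 g2 \<eta> (2^j1) (2^l1) F1)) (nnf (PS g1 g2 \<eta> (2^j2) (2^l2) F2)) \<tau> m)"
proof -
  define G1 where "G1 j l = nnf (PS g1 g2 \<eta> (2^j) (2^l) F1)" for j l :: nat
  define G2 where "G2 j l = nnf (PS g1 g2 \<eta> (2^j) (2^l) F2)" for j l :: nat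
  have mG1[measurable]: "(\<lambda>\<tau>. G1 j l \<tau> m) \<in> borel_measurable lborel" for j l m
    unfolding G1_def by (rule PS_meas[OF b m1])
  have mG2[measurable]: "(\<lambda>\<tau>. G2 j l \<tau> m) \<in> borel_measurable lborel" for j l m
    unfolding G2_def by (rule PS_meas[OF b m2])
  have "conv (nnf F1) (nnf F2) \<tau> m \<le> conv (\<lambda>t m. \<Sum>j. \<Sum>l. G1 j l t m) (\<lambda>t m. \<Sum>j. \<Sum>l. G2 j l t m) \<tau> m"
    unfolding G1_def G2_def by (intro conv_mono decomp[OF b])
  also have "\<dots> = (\<Sum>j1. conv (\<lambda>t m. \<Sum>l. G1 j1 l t m) (\<lambda>t m. \<Sum>j. \<Sum>l. G2 j l t m) \<tau> m)"
    by (rule conv_suminf1) measurable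
  also have "\<dots> = (\<Sum>j1. \<Sum>l1. conv (G1 j1 l1) (\<lambda>t m. \<Sum>j. \<Sum>l. G2 j l t m) \<tau> m)"
    by (intro suminf_cong conv_suminf1) measurable
  also have "\<dots> = (\<Sum>j1. \<Sum>l1. \<Sum>j2. conv (G1 j1 l1) (\<lambda>t m. \<Sum>l. G2 j2 l t m) \<tau> m)"
    by (intro suminf_cong conv_suminf2) measurable
  also have "\<dots> = (\<Sum>j1. \<Sum>l1. \<Sum>j2. \<Sum>l2. conv (G1 j1 l1) (G2 j2 l2) \<tau> m)"
    by (intro suminf_cong conv_suminf2) measurable
  finally show ?thesis unfolding G1_def G2_def .
qed

definition Wf :: "real \<Rightarrow> nat \<Rightarrow> nat \<Rightarrow> nat \<Rightarrow> real" where
  "Wf e l1 j2 l2 = (2^l1) powr (1/2-e) * ((2^j2) powr (4*e) * (2^l2) powr (1/2-e) + (2^j2) powr (1/2+2*e) * (2^l2) powr e)"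

lemma Wf_nonneg: "Wf e l1 j2 l2 \<ge> 0"
  unfolding Wf_def by simp

lemma PS_zero:
  assumes b: "bump \<eta>" and "\<not> sp g1 g2 (2^j) (2^l) \<tau> m"
  shows "nnf (PS g1 g2 \<eta> (2^j) (2^l) F) \<tau> m = 0"
proof (rule ccontr)
  assume "nnf (PS g1 g2 \<eta> (2^j) (2^l) F) \<tau> m \<noteq> 0"
  then have h: "eta_dy \<eta> (2^j) (knorm g1 g2 m) \<noteq> 0" "eta_dy \<eta> (2^l) (\<tau> + (knorm g1 g2 m)^2) \<noteq> 0"
    unfolding nnf_def PS_def by auto
  have "\<bar>knorm g1 g2 m\<bar> < 2 * 2^j" by (rule eta_dy_supp[OF b _ h(1)]) simp
  moreover have "\<bar>\<tau> + (knorm g1 g2 m)^2\<bar> < 2 * 2^l" by (rule eta_dy_supp[OF b _ h(2)]) simp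
  ultimately have "sp g1 g2 (2^j) (2^l) \<tau> m" unfolding sp_def by auto
  with assms(2) show False by simp
qed

lemma sp_sets: "{\<tau>. sp g1 g2 N L \<tau> m} \<in> sets lborel"
  unfolding sp_def by measurable

lemma piece_bound:
  assumes g: "g1 > 0" "g2 > 0" and b: "bump \<eta>" and e: "0 < e" "e \<le> 1/4"
    and m1: "\<And>m. (\<lambda>\<tau>. F1 \<tau> m) \<in> borel_measurable lborel"
    and m2: "\<And>m. (\<lambda>\<tau>. F2 \<tau> m) \<in> borel_measurable lborel"
  shows "QS (conv (nnf (PS g1 g2 \<eta> (2^j1) (2^l1) F1)) (nnf (PS g1 g2 \<eta> (2^j2) (2^l2) F2)))
     \<le> ennreal (sqrt (8 * Kc g1 g2) * Wf e l1 j2 l2) * (QS (nnf (PS g1 g2 \<eta> (2^j1) (2^l1) F1)) * QS (nnf (PS g1 g2 \<eta> (2^j2) (2^l2) F2)))"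
proof -
  define M where "M = ennreal (8 * Kc g1 g2 * (Wf e l1 j2 l2)^2)"
  have Kp: "Kc g1 g2 > 0" using Kc_pos g .
  have "Qn (conv (nnf (PS g1 g2 \<eta> (2^j1) (2^l1) F1)) (nnf (PS g1 g2 \<eta> (2^j2) (2^l2) F2)))
     \<le> M * (Qn (nnf (PS g1 g2 \<eta> (2^j1) (2^l1) F1)) * Qn (nnf (PS g1 g2 \<eta> (2^j2) (2^l2) F2)))"
  proof (rule conv_bilinear[where sa = "sp g1 g2 (2^j1) (2^l1)" and sb = "sp g1 g2 (2^j2) (2^l2)"])
    show "\<And>m. (\<lambda>\<tau>. nnf (PS g1 g2 \<eta> (2^j1) (2^l1) F1) \<tau> m) \<in> borel_measurable lborel" by (rule PS_meas[OF b m1])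
    show "\<And>m. (\<lambda>\<tau>. nnf (PS g1 g2 \<eta> (2^j2) (2^l2) F2) \<tau> m) \<in> borel_measurable lborel" by (rule PS_meas[OF b m2])
    show "\<And>m. {\<tau>. sp g1 g2 (2^j1) (2^l1) \<tau> m} \<in> sets lborel" by (rule sp_sets)
    show "\<And>m. {\<tau>. sp g1 g2 (2^j2) (2^l2) \<tau> m} \<in> sets lborel" by (rule sp_sets)
    show "\<And>\<tau> m. \<not> sp g1 g2 (2^j1) (2^l1) \<tau> m \<Longrightarrow> nnf (PS g1 g2 \<eta> (2^j1) (2^l1) F1) \<tau> m = 0"
      by (rule PS_zero[OF b])
    show "\<And>\<tau> m. \<not> sp g1 g2 (2^j2) (2^l2) \<tau> m \<Longrightarrow> nnf (PS g1 g2 \<eta> (2^j2) (2^l2) F2) \<tau> m = 0"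
      by (rule PS_zero[OF b])
    show "\<And>\<tau> m. (\<integral>\<^sup>+ m1. (\<integral>\<^sup>+ \<tau>1. indicator {t. sp g1 g2 (2^j1) (2^l1) t m1} \<tau>1 * indicator {t. sp g1 g2 (2^j2) (2^l2) t (m - m1)} (\<tau> - \<tau>1) \<partial>lborel) \<partial>count_space UNIV) \<le> M"
      unfolding M_def Wf_def by (rule M_final[OF g e]) simp_all
  qed
  then have "QS (conv (nnf (PS g1 g2 \<eta> (2^j1) (2^l1) F1)) (nnf (PS g1 g2 \<eta> (2^j2) (2^l2) F2)))
     \<le> enn_sqrt M * (QS (nnf (PS g1 g2 \<eta> (2^j1) (2^l1) F1)) * QS (nnf (PS g1 g2 \<eta> (2^j2) (2^l2) F2)))"
    unfolding QS_def enn_sqrt_mult[symmetric] by (rule enn_sqrt_mono)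
  also have "enn_sqrt M = ennreal (sqrt (8 * Kc g1 g2) * Wf e l1 j2 l2)"
    unfolding M_def enn_sqrt_def using Kp Wf_nonneg[of e l1 j2 l2] by (simp add: real_sqrt_mult)
  finally show ?thesis .
qed

lemma pow2_less: "(2::real)^a < 2^b \<longleftrightarrow> a < b"
  by (rule power_strict_increasing_iff) simp

lemma j_window:
  assumes b: "bump \<eta>" and inP: "in_PN g1 g2 (2^a) m" and ne: "eta_dy \<eta> (2^j) (knorm g1 g2 m) \<noteq> 0"
  shows "j \<in> {a - 1, a, a + 1}"
proof -
  define k where "k = knorm g1 g2 m"
  have k0: "k \<ge> 0" unfolding k_def knorm_def by simp
  have up: "k < 2 * 2^j" using eta_dy_supp[OF b _ ne] k0 unfolding k_def by simp
  have low: "j \<noteq> 0 \<Longrightarrow> k > 2^j / 2"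
  proof -
    assume "j \<noteq> 0"
    then have "(1::real) < 2^j" by (intro one_less_power) auto
    then have "(2::real)^j \<noteq> 1" by simp
    then show ?thesis using eta_dy_supp_low[OF b _ _ ne] k0 unfolding k_def by simp
  qed
  show ?thesis
  proof (cases "a = 0")
    case True
    then have "k \<le> 2" using inP unfolding in_PN_def k_def by simp
    have "j \<le> 1"
    proof (rule ccontr)
      assume "\<not> j \<le> 1"
      then have "j \<noteq> 0" by simp
      from low[OF this] \<open>k \<le> 2\<close> have "(2::real)^j < 2^2" by simp
      then have "j < 2" using pow2_less by blast
      with \<open>\<not> j \<le> 1\<close> show False by simp
    qed
    then show ?thesis using True by auto
  next
    case False
    then have "(1::real) < 2^a" by (intro one_less_power) auto
    then have "(2::real)^a \<noteq> 1" by simp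
    then have kb: "2^a / 2 \<le> k" "k \<le> 2 * 2^a" using inP unfolding in_PN_def k_def by auto
    have "(2::real)^a < 2^(j+2)" using kb(1) up by (simp add: power_add)
    then have j1: "a < j + 2" using pow2_less by blast
    have j2: "j < a + 2"
    proof (cases "j = 0")
      case True then show ?thesis by simp
    next
      case False
      from low[OF False] kb(2) have "(2::real)^j < 2^(a+2)" by (simp add: power_add)
      then show ?thesis using pow2_less by blast
    qed
    from j1 j2 show ?thesis by auto
  qed
qed

lemma L2norm_zero: "(\<And>\<tau> m. F \<tau> m = 0) \<Longrightarrow> L2norm g1 g2 F = 0"
  unfolding L2norm_def enn_sqrt_def by simp

definition XA :: "real \<Rightarrow> real \<Rightarrow> (real \<Rightarrow> real) \<Rightarrow> real \<Rightarrow> real \<Rightarrow> stfun \<Rightarrow> nat \<Rightarrow> ennreal" where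
  "XA g1 g2 \<eta> s bb F j = (\<Sum>l. ennreal ((2 ^ j) powr s * (2 ^ l) powr bb) * L2norm g1 g2 (PS g1 g2 \<eta> (2 ^ j) (2 ^ l) F))"

lemma XS1_XA: "XS1 g1 g2 \<eta> s bb F = enn_sqrt (\<Sum>j. (XA g1 g2 \<eta> s bb F j)^2)"
  unfolding XS1_def XA_def ..

lemma window:
  assumes b: "bump \<eta>" and d: "dyadic N" and sup: "supp_in_PN g1 g2 N F"
  shows "(\<Sum>j. XA g1 g2 \<eta> s bb F j) \<le> 3 * XS1 g1 g2 \<eta> s bb F"
proof -
  obtain a where a: "N = 2^a" using d unfolding dyadic_def by auto
  define W where "W = {a - 1, a, a + 1}"
  have z: "XA g1 g2 \<eta> s bb F j = 0" if "j \<notin> W" for j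
  proof -
    have "PS g1 g2 \<eta> (2 ^ j) (2 ^ l) F \<tau> m = 0" for l \<tau> m
    proof (cases "F \<tau> m = 0")
      case False
      then have "in_PN g1 g2 (2^a) m" using sup a unfolding supp_in_PN_def by blast
      then have "eta_dy \<eta> (2^j) (knorm g1 g2 m) = 0" using j_window[OF b] that unfolding W_def by blast
      then show ?thesis unfolding PS_def by simp
    qed (simp add: PS_def)
    then show ?thesis unfolding XA_def by (simp add: L2norm_zero)
  qed
  have "(\<Sum>j. XA g1 g2 \<eta> s bb F j) = (\<Sum>j\<in>W. XA g1 g2 \<eta> s bb F j)"
    by (rule suminf_finite) (auto simp: W_def z)
  also have "\<dots> \<le> (\<Sum>j\<in>W. XS1 g1 g2 \<eta> s bb F)"
  proof (rule sum_mono)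
    fix j
    have "(XA g1 g2 \<eta> s bb F j)^2 \<le> (\<Sum>j. (XA g1 g2 \<eta> s bb F j)^2)"
      using sum_le_suminf[of "\<lambda>j. (XA g1 g2 \<eta> s bb F j)^2" "{j}"] by simp
    then show "XA g1 g2 \<eta> s bb F j \<le> XS1 g1 g2 \<eta> s bb F"
      unfolding XS1_XA by (metis enn_sqrt_mono enn_sqrt_of_sq)
  qed
  also have "\<dots> = of_nat (card W) * XS1 g1 g2 \<eta> s bb F" by simp
  also have "\<dots> \<le> 3 * XS1 g1 g2 \<eta> s bb F"
  proof (rule mult_right_mono)
    have "card W \<le> 3" unfolding W_def by (rule order_trans[OF card_insert_le_m1]) (auto intro!: order_trans[OF card_insert_le_m1])
    then show "of_nat (card W) \<le> (3::ennreal)" by (metis of_nat_le_iff numeral_eq_of_nat ennreal_of_nat_eq_real_of_nat ennreal_numeral of_nat_numeral)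
  qed simp
  finally show ?thesis .
qed

lemma sum4_factor:
  fixes u v :: "nat \<Rightarrow> nat \<Rightarrow> ennreal"
  shows "(\<Sum>a. \<Sum>b. \<Sum>c. \<Sum>d. k * (u a b * v c d)) = k * ((\<Sum>a. \<Sum>b. u a b) * (\<Sum>c. \<Sum>d. v c d))"
  by (simp only: mult.assoc[symmetric] ennreal_suminf_cmult ennreal_suminf_multc)

lemma main_bound:
  assumes g: "g1 > 0" "g2 > 0" and b: "bump \<eta>" and e: "0 < e" "e \<le> 1/4"
    and d1: "dyadic N1" and d2: "dyadic N2"
    and m1: "\<And>m. (\<lambda>\<tau>. F1 \<tau> m) \<in> borel_measurable lborel"
    and m2: "\<And>m. (\<lambda>\<tau>. F2 \<tau> m) \<in> borel_measurable lborel"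
    and s1: "supp_in_PN g1 g2 N1 F1" and s2: "supp_in_PN g1 g2 N2 F2"
  shows "L2norm g1 g2 (prod_ft g1 g2 F1 F2) \<le> ennreal (9 * sqrt (cst g1 g2) * sqrt (8 * Kc g1 g2)) *
     (XS1 g1 g2 \<eta> 0 (1/2 - e) F1 * XS1 g1 g2 \<eta> (4 * e) (1/2 - e) F2
      + XS1 g1 g2 \<eta> 0 (1/2 - e) F1 * XS1 g1 g2 \<eta> (1/2 + 2 * e) e F2)"
proof -
  define c where "c = cst g1 g2"
  have c0: "c > 0" unfolding c_def using cst_pos g .
  define sc where "sc = enn_sqrt (ennreal c)"
  have sc: "sc = ennreal (sqrt c)" unfolding sc_def enn_sqrt_def using c0 by simp
  define k0 where "k0 = ennreal (sqrt (8 * Kc g1 g2))"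
  define Q1 where "Q1 j l = QS (nnf (PS g1 g2 \<eta> (2^j) (2^l) F1))" for j l :: nat
  define Q2 where "Q2 j l = QS (nnf (PS g1 g2 \<eta> (2^j) (2^l) F2))" for j l :: nat
  define w1 where "w1 l = ((2::real)^l) powr (1/2 - e)" for l :: nat
  define ab where "ab j l = ((2::real)^j) powr (4*e) * (2^l) powr (1/2-e) + (2^j) powr (1/2+2*e) * (2^l) powr e" for j l :: nat
  define H where "H j1 l1 j2 l2 = conv (nnf (PS g1 g2 \<eta> (2^j1) (2^l1) F1)) (nnf (PS g1 g2 \<eta> (2^j2) (2^l2) F2))"
    for j1 l1 j2 l2 :: nat
  define U where "U = (\<Sum>j. \<Sum>l. ennreal (w1 l) * Q1 j l)"
  define V where "V = (\<Sum>j. \<Sum>l. ennreal (ab j l) * Q2 j l)"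
  define X1 where "X1 = XS1 g1 g2 \<eta> 0 (1/2 - e) F1"
  define X2a where "X2a = XS1 g1 g2 \<eta> (4 * e) (1/2 - e) F2"
  define X2b where "X2b = XS1 g1 g2 \<eta> (1/2 + 2 * e) e F2"
  have mP1: "\<And>j l m. (\<lambda>\<tau>. nnf (PS g1 g2 \<eta> (2^j) (2^l) F1) \<tau> m) \<in> borel_measurable lborel"
    by (rule PS_meas[OF b m1])
  have mP2: "\<And>j l m. (\<lambda>\<tau>. nnf (PS g1 g2 \<eta> (2^j) (2^l) F2) \<tau> m) \<in> borel_measurable lborel"
    by (rule PS_meas[OF b m2])
  have mH: "\<And>j1 l1 j2 l2 m. (\<lambda>\<tau>. H j1 l1 j2 l2 \<tau> m) \<in> borel_measurable lborel"
    unfolding H_def by (rule conv_meas) (rule mP1, rule mP2)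
  have w1ab: "Wf e l1 j2 l2 = w1 l1 * ab j2 l2" for l1 j2 l2 unfolding Wf_def w1_def ab_def ..
  have "L2norm g1 g2 (prod_ft g1 g2 F1 F2) \<le> sc^3 * QS (conv (nnf F1) (nnf F2))"
    unfolding sc_def c_def by (rule LHS_bound[OF g m1 m2])
  also have "QS (conv (nnf F1) (nnf F2)) \<le> QS (\<lambda>\<tau> m. \<Sum>j1. \<Sum>l1. \<Sum>j2. \<Sum>l2. H j1 l1 j2 l2 \<tau> m)"
    unfolding H_def by (rule QS_mono) (rule conv_decomp[OF b m1 m2])
  also have "\<dots> \<le> (\<Sum>j1. \<Sum>l1. \<Sum>j2. \<Sum>l2. QS (H j1 l1 j2 l2))"
    by (rule QS_suminf4) (rule mH)
  also have "\<dots> \<le> (\<Sum>j1. \<Sum>l1. \<Sum>j2. \<Sum>l2. k0 * ((ennreal (w1 l1) * Q1 j1 l1) * (ennreal (ab j2 l2) * Q2 j2 l2)))"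
  proof (intro suminf_le summableI allI)
    fix j1 l1 j2 l2
    have "QS (H j1 l1 j2 l2) \<le> ennreal (sqrt (8 * Kc g1 g2) * Wf e l1 j2 l2) * (Q1 j1 l1 * Q2 j2 l2)"
      unfolding H_def Q1_def Q2_def by (rule piece_bound[OF g b e m1 m2])
    also have "\<dots> = k0 * ((ennreal (w1 l1) * Q1 j1 l1) * (ennreal (ab j2 l2) * Q2 j2 l2))"
    proof -
      have nn: "0 \<le> w1 l1" "0 \<le> ab j2 l2" unfolding w1_def ab_def by simp_all
      have A: "ennreal (w1 l1 * ab j2 l2) = ennreal (w1 l1) * ennreal (ab j2 l2)" by (rule ennreal_mult[OF nn])
      have B: "ennreal (sqrt (8 * Kc g1 g2) * (w1 l1 * ab j2 l2)) = ennreal (sqrt (8 * Kc g1 g2)) * ennreal (w1 l1 * ab j2 l2)"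
        by (rule ennreal_mult) (use nn Kc_pos[OF g] in simp_all)
      show ?thesis unfolding k0_def w1ab B A by (simp only: mult_ac)
    qed
    finally show "QS (H j1 l1 j2 l2) \<le> k0 * ((ennreal (w1 l1) * Q1 j1 l1) * (ennreal (ab j2 l2) * Q2 j2 l2))" .
  qed
  also have "\<dots> = k0 * (U * V)" unfolding U_def V_def by (rule sum4_factor)
  finally have L: "L2norm g1 g2 (prod_ft g1 g2 F1 F2) \<le> sc^3 * (k0 * (U * V))" by (simp add: mult_left_mono)
  have L2: "L2norm g1 g2 (PS g1 g2 \<eta> (2^j) (2^l) F) = sc * QS (nnf (PS g1 g2 \<eta> (2^j) (2^l) F))"
    if "\<And>m. (\<lambda>\<tau>. F \<tau> m) \<in> borel_measurable lborel" for F j l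
    unfolding sc_def c_def by (rule L2norm_eq[OF g PS_meas[OF b that]])
  have U3: "sc * U \<le> 3 * X1"
  proof -
    have "sc * U = (\<Sum>j. \<Sum>l. sc * (ennreal (w1 l) * Q1 j l))"
      unfolding U_def by (simp only: ennreal_suminf_cmult)
    also have "\<dots> = (\<Sum>j. XA g1 g2 \<eta> 0 (1/2 - e) F1 j)"
      unfolding XA_def L2[OF m1] Q1_def w1_def by (intro suminf_cong) (simp add: mult_ac)
    also have "\<dots> \<le> 3 * X1" unfolding X1_def by (rule window[OF b d1 s1])
    finally show ?thesis .
  qed
  have V3: "sc * V \<le> 3 * X2a + 3 * X2b"
  proof -
    have "sc * V = (\<Sum>j. \<Sum>l. sc * (ennreal (ab j l) * Q2 j l))"
      unfolding V_def by (simp only: ennreal_suminf_cmult)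
    also have "\<dots> = (\<Sum>j. XA g1 g2 \<eta> (4 * e) (1/2 - e) F2 j + XA g1 g2 \<eta> (1/2 + 2 * e) e F2 j)"
    proof (rule suminf_cong)
      fix j
      have "XA g1 g2 \<eta> (4 * e) (1/2 - e) F2 j + XA g1 g2 \<eta> (1/2 + 2 * e) e F2 j
        = (\<Sum>l. ennreal ((2 ^ j) powr (4 * e) * (2 ^ l) powr (1/2 - e)) * L2norm g1 g2 (PS g1 g2 \<eta> (2 ^ j) (2 ^ l) F2)
              + ennreal ((2 ^ j) powr (1/2 + 2 * e) * (2 ^ l) powr e) * L2norm g1 g2 (PS g1 g2 \<eta> (2 ^ j) (2 ^ l) F2))"
        unfolding XA_def by (rule suminf_add) auto
      also have "\<dots> = (\<Sum>l. sc * (ennreal (ab j l) * Q2 j l))"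
      proof (rule suminf_cong)
        fix l
        have "ennreal (ab j l) = ennreal ((2 ^ j) powr (4 * e) * (2 ^ l) powr (1/2 - e)) + ennreal ((2 ^ j) powr (1/2 + 2 * e) * (2 ^ l) powr e)"
          unfolding ab_def by (rule ennreal_plus) simp_all
        then show "ennreal ((2 ^ j) powr (4 * e) * (2 ^ l) powr (1/2 - e)) * L2norm g1 g2 (PS g1 g2 \<eta> (2 ^ j) (2 ^ l) F2)
              + ennreal ((2 ^ j) powr (1/2 + 2 * e) * (2 ^ l) powr e) * L2norm g1 g2 (PS g1 g2 \<eta> (2 ^ j) (2 ^ l) F2)
              = sc * (ennreal (ab j l) * Q2 j l)"
          unfolding L2[OF m2] Q2_def by (simp add: algebra_simps)
      qed
      finally show "(\<Sum>l. sc * (ennreal (ab j l) * Q2 j l)) = XA g1 g2 \<eta> (4 * e) (1/2 - e) F2 j + XA g1 g2 \<eta> (1/2 + 2 * e) e F2 j"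
        by (rule sym)
    qed
    also have "\<dots> = (\<Sum>j. XA g1 g2 \<eta> (4 * e) (1/2 - e) F2 j) + (\<Sum>j. XA g1 g2 \<eta> (1/2 + 2 * e) e F2 j)"
      by (rule suminf_add[symmetric]) auto
    also have "\<dots> \<le> 3 * X2a + 3 * X2b"
      unfolding X2a_def X2b_def by (intro add_mono window[OF b d2 s2])
    finally show ?thesis .
  qed
  have "sc^3 * (k0 * (U * V)) = sc * k0 * ((sc * U) * (sc * V))" by (simp add: power3_eq_cube mult_ac)
  also have "\<dots> \<le> sc * k0 * ((3 * X1) * (3 * X2a + 3 * X2b))"
    by (intro mult_left_mono mult_mono U3 V3) auto
  also have "\<dots> = ennreal (9 * sqrt c * sqrt (8 * Kc g1 g2)) * (X1 * X2a + X1 * X2b)"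
  proof -
    have E: "ennreal (9 * sqrt c * sqrt (8 * Kc g1 g2)) = 9 * sc * k0"
      unfolding sc k0_def using c0 Kc_pos[OF g] by (simp add: ennreal_mult)
    show ?thesis unfolding E by (simp add: algebra_simps)
  qed
  finally have R: "sc^3 * (k0 * (U * V)) \<le> ennreal (9 * sqrt c * sqrt (8 * Kc g1 g2)) * (X1 * X2a + X1 * X2b)" .
  show ?thesis using order_trans[OF L R] unfolding c_def X1_def X2a_def X2b_def .
qed


theorem lemma4p3:
  fixes g1 g2 :: real and \<eta> :: "real \<Rightarrow> real"
  assumes "g1 > 0" and "g2 > 0" and "bump \<eta>"
  shows "\<exists>\<epsilon>0>0. \<forall>\<epsilon>. 0 < \<epsilon> \<and> \<epsilon> < \<epsilon>0 \<longrightarrow>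
    (\<exists>C::real. C > 0 \<and>
      (\<forall>N1 N2 (F1::stfun) (F2::stfun).
         dyadic N1 \<and> dyadic N2 \<and>
         (\<forall>m. (\<lambda>\<tau>. F1 \<tau> m) \<in> borel_measurable lborel) \<and>
         (\<forall>m. (\<lambda>\<tau>. F2 \<tau> m) \<in> borel_measurable lborel) \<and>
         supp_in_PN g1 g2 N1 F1 \<and> supp_in_PN g1 g2 N2 F2 \<longrightarrow>
         L2norm g1 g2 (prod_ft g1 g2 F1 F2)
           \<le> ennreal (C * (max N1 N2) powr \<epsilon>) *
              (XS1 g1 g2 \<eta> 0 (1/2 - \<epsilon>) F1 * XS1 g1 g2 \<eta> (4 * \<epsilon>) (1/2 - \<epsilon>) F2
               + XS1 g1 g2 \<eta> 0 (1/2 - \<epsilon>) F1 * XS1 g1 g2 \<eta> (1/2 + 2 * \<epsilon>) \<epsilon> F2)))"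
proof (rule exI[of _ "1/4"], intro conjI allI impI)
  show "(0::real) < 1/4" by simp
  fix \<epsilon> :: real
  assume e: "0 < \<epsilon> \<and> \<epsilon> < 1/4"
  define C where "C = 9 * sqrt (cst g1 g2) * sqrt (8 * Kc g1 g2)"
  have Cpos: "C > 0" unfolding C_def using cst_pos[OF assms(1,2)] Kc_pos[OF assms(1,2)] by simp
  show "\<exists>C::real. C > 0 \<and>
      (\<forall>N1 N2 (F1::stfun) (F2::stfun).
         dyadic N1 \<and> dyadic N2 \<and>
         (\<forall>m. (\<lambda>\<tau>. F1 \<tau> m) \<in> borel_measurable lborel) \<and>
         (\<forall>m. (\<lambda>\<tau>. F2 \<tau> m) \<in> borel_measurable lborel) \<and>
         supp_in_PN g1 g2 N1 F1 \<and> supp_in_PN g1 g2 N2 F2 \<longrightarrow>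
         L2norm g1 g2 (prod_ft g1 g2 F1 F2)
           \<le> ennreal (C * (max N1 N2) powr \<epsilon>) *
              (XS1 g1 g2 \<eta> 0 (1/2 - \<epsilon>) F1 * XS1 g1 g2 \<eta> (4 * \<epsilon>) (1/2 - \<epsilon>) F2
               + XS1 g1 g2 \<eta> 0 (1/2 - \<epsilon>) F1 * XS1 g1 g2 \<eta> (1/2 + 2 * \<epsilon>) \<epsilon> F2))"
  proof (intro exI[of _ C] conjI allI impI)
    show "C > 0" by (rule Cpos)
    fix N1 N2 :: real and F1 F2 :: stfun
    assume h: "dyadic N1 \<and> dyadic N2 \<and>
         (\<forall>m. (\<lambda>\<tau>. F1 \<tau> m) \<in> borel_measurable lborel) \<and>
         (\<forall>m. (\<lambda>\<tau>. F2 \<tau> m) \<in> borel_measurable lborel) \<and>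
         supp_in_PN g1 g2 N1 F1 \<and> supp_in_PN g1 g2 N2 F2"
    have mb: "L2norm g1 g2 (prod_ft g1 g2 F1 F2) \<le> ennreal C *
       (XS1 g1 g2 \<eta> 0 (1/2 - \<epsilon>) F1 * XS1 g1 g2 \<eta> (4 * \<epsilon>) (1/2 - \<epsilon>) F2
        + XS1 g1 g2 \<eta> 0 (1/2 - \<epsilon>) F1 * XS1 g1 g2 \<eta> (1/2 + 2 * \<epsilon>) \<epsilon> F2)"
    proof -
      have e1: "0 < \<epsilon>" "\<epsilon> \<le> 1/4" using e by auto
      have d: "dyadic N1" "dyadic N2" using h by auto
      have mm1: "\<And>m. (\<lambda>\<tau>. F1 \<tau> m) \<in> borel_measurable lborel" using h by blast
      have mm2: "\<And>m. (\<lambda>\<tau>. F2 \<tau> m) \<in> borel_measurable lborel" using h by blast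
      have sp1: "supp_in_PN g1 g2 N1 F1" "supp_in_PN g1 g2 N2 F2" using h by auto
      show ?thesis unfolding C_def by (rule main_bound[OF assms(1,2,3) e1 d mm1 mm2 sp1])
    qed
    have N1: "N1 \<ge> 1" using h unfolding dyadic_def by auto
    then have "1 \<le> max N1 N2" by simp
    then have "1 \<le> (max N1 N2) powr \<epsilon>" using e by (simp add: ge_one_powr_ge_zero)
    then have "C \<le> C * (max N1 N2) powr \<epsilon>" using Cpos by simp
    then have "ennreal C \<le> ennreal (C * (max N1 N2) powr \<epsilon>)" by (rule ennreal_leI)
    then have "ennreal C *
       (XS1 g1 g2 \<eta> 0 (1/2 - \<epsilon>) F1 * XS1 g1 g2 \<eta> (4 * \<epsilon>) (1/2 - \<epsilon>) F2
        + XS1 g1 g2 \<eta> 0 (1/2 - \<epsilon>) F1 * XS1 g1 g2 \<eta> (1/2 + 2 * \<epsilon>) \<epsilon> F2)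
      \<le> ennreal (C * (max N1 N2) powr \<epsilon>) *
       (XS1 g1 g2 \<eta> 0 (1/2 - \<epsilon>) F1 * XS1 g1 g2 \<eta> (4 * \<epsilon>) (1/2 - \<epsilon>) F2
        + XS1 g1 g2 \<eta> 0 (1/2 - \<epsilon>) F1 * XS1 g1 g2 \<eta> (1/2 + 2 * \<epsilon>) \<epsilon> F2)"
      by (rule mult_right_mono) simp
    with mb show "L2norm g1 g2 (prod_ft g1 g2 F1 F2)
           \<le> ennreal (C * (max N1 N2) powr \<epsilon>) *
              (XS1 g1 g2 \<eta> 0 (1/2 - \<epsilon>) F1 * XS1 g1 g2 \<eta> (4 * \<epsilon>) (1/2 - \<epsilon>) F2
               + XS1 g1 g2 \<eta> 0 (1/2 - \<epsilon>) F1 * XS1 g1 g2 \<eta> (1/2 + 2 * \<epsilon>) \<epsilon> F2)"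
      by (rule order_trans)
  qed
qed

end
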